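(* Let $0\le d<r<\min\{m,n\}$. The map \[\mathrm{mult}_{d,r}:R(\mathcal{UZ}_{n,m,r+1})_d\to R(\mathcal{UZ}_{n,m,r})_{d+1},\qquad f+\mathrm{gr}\,\mathbf{I}(\mathcal{UZ}_{n,m,r+1})\mapsto f\cdot\sum_{i=1}^n\sum_{j=1}^m x_{i,j}+\mathrm{gr}\,\mathbf{I}(\mathcal{UZ}_{n,m,r})\] is a well-defined injective homomorphism of $\mathfrak{S}_n\times\mathfrak{S}_m$-modules, and there is an $\mathfrak{S}_n\times\mathfrak{S}_m$-module isomorphism \[R(\mathcal{UZ}_{n,m,r})_{d+1}/\mathrm{mult}_{d,r}\bigl(R(\mathcal{UZ}_{n,m,r+1})_d\bigr)\cong R(\mathcal{Z}_{n,m,r})_{d+1}.\]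
   Context: Fix positive integers $n,m$. $\mathbb{C}[\mathbf{x}_{n\times m}]$ is the polynomial ring in variables $x_{i,j}$; $\mathfrak{S}_n\times\mathfrak{S}_m$ acts by $(g,h)\cdot x_{i,j}=x_{g(i),h(j)}$. For finite stable $\mathcal{Z}\subseteq\mathrm{Mat}_{n\times m}(\mathbb{C})$, $\mathbf{I}(\mathcal{Z})$ is the vanishing ideal, $\mathrm{gr}\,\mathbf{I}(\mathcal{Z})$ the ideal generated by top-degree homogeneous components of its nonzero elements, and $R(\mathcal{Z})=\mathbb{C}[\mathbf{x}_{n\times m}]/\mathrm{gr}\,\mathbf{I}(\mathcal{Z})$ with degree-$d$ component $R(\mathcal{Z})_d$. $\mathcal{Z}_{n,m,r}$ is the set of $n\times m$ $0/1$ matrices with exactly $r$ ones and at most one $1$ in each row and column (rook placements with $r$ rooks), and $\mathcal{UZ}_{n,m,r}:=\bigsqcup_{r'=r}^{\min\{m,n\}}\mathcal{Z}_{n,m,r'}$ (upper rook placement locus). *)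

theory Defs
  imports "HOL-Library.Poly_Mapping" "HOL-Combinatorics.Permutations" Complex_Main
begin

text \<open>Polynomials in the variables x_(i,j) (0-indexed: i < n, j < m) over the complex
numbers, represented as finitely supported maps from monomials to coefficients;
a monomial is a finitely supported exponent map on variable indices.\<close>

type_synonym mono = "(nat \<times> nat) \<Rightarrow>\<^sub>0 nat"
type_synonym mpoly = "mono \<Rightarrow>\<^sub>0 complex"

definition PR :: "nat \<Rightarrow> nat \<Rightarrow> mpoly set" where
  "PR n m = {p :: mpoly. \<forall>\<mu>\<in>Poly_Mapping.keys p. \<forall>v\<in>Poly_Mapping.keys \<mu>. fst v < n \<and> snd v < m}"

definition Var :: "nat \<times> nat \<Rightarrow> mpoly" where
  "Var v = Poly_Mapping.single (Poly_Mapping.single v 1) 1"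

definition smult :: "complex \<Rightarrow> mpoly \<Rightarrow> mpoly" where
  "smult c p = Poly_Mapping.map (\<lambda>x. c * x) p"

definition mdeg :: "mono \<Rightarrow> nat" where
  "mdeg \<mu> = (\<Sum>v\<in>Poly_Mapping.keys \<mu>. Poly_Mapping.lookup \<mu> v)"

text \<open>Total degree of a nonzero polynomial.\<close>
definition tdeg :: "mpoly \<Rightarrow> nat" where
  "tdeg p = Max (mdeg ` Poly_Mapping.keys p)"

definition hcomp :: "nat \<Rightarrow> mpoly \<Rightarrow> mpoly" where
  "hcomp k p = (\<Sum>\<mu>\<in>{\<mu>\<in>Poly_Mapping.keys p. mdeg \<mu> = k}. Poly_Mapping.single \<mu> (Poly_Mapping.lookup p \<mu>))"

definition topc :: "mpoly \<Rightarrow> mpoly" where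
  "topc p = hcomp (tdeg p) p"

text \<open>Matrices in Mat_(n x m)(C) are represented as functions nat x nat => complex
vanishing outside {..<n} x {..<m}; evaluation of a polynomial at a matrix.\<close>
definition eval :: "mpoly \<Rightarrow> (nat \<times> nat \<Rightarrow> complex) \<Rightarrow> complex" where
  "eval p A = (\<Sum>\<mu>\<in>Poly_Mapping.keys p. Poly_Mapping.lookup p \<mu> * (\<Prod>v\<in>Poly_Mapping.keys \<mu>. A v ^ Poly_Mapping.lookup \<mu> v))"

definition vanI :: "nat \<Rightarrow> nat \<Rightarrow> (nat \<times> nat \<Rightarrow> complex) set \<Rightarrow> mpoly set" where
  "vanI n m Z = {p \<in> PR n m. \<forall>A\<in>Z. eval p A = 0}"

definition ideal_gen :: "nat \<Rightarrow> nat \<Rightarrow> mpoly set \<Rightarrow> mpoly set" where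
  "ideal_gen n m G = {(\<Sum>i<k. q i * g i) | (k::nat) (q::nat \<Rightarrow> mpoly) (g::nat \<Rightarrow> mpoly). \<forall>i<k. q i \<in> PR n m \<and> g i \<in> G}"

definition grI :: "nat \<Rightarrow> nat \<Rightarrow> (nat \<times> nat \<Rightarrow> complex) set \<Rightarrow> mpoly set" where
  "grI n m Z = ideal_gen n m {topc p | p. p \<in> vanI n m Z \<and> p \<noteq> 0}"

text \<open>Homogeneous polynomials of degree d (including 0).  The degree-d component
R(Z)_d of R(Z) is the quotient of Hom n m d by grI n m Z intersected with Hom n m d.\<close>
definition Hom :: "nat \<Rightarrow> nat \<Rightarrow> nat \<Rightarrow> mpoly set" where
  "Hom n m d = {p \<in> PR n m. \<forall>\<mu>\<in>Poly_Mapping.keys p. mdeg \<mu> = d}"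

definition rookZ :: "nat \<Rightarrow> nat \<Rightarrow> nat \<Rightarrow> (nat \<times> nat \<Rightarrow> complex) set" where
  "rookZ n m r = {A. (\<forall>v. A v = 0 \<or> A v = 1)
      \<and> (\<forall>i j. A (i, j) \<noteq> 0 \<longrightarrow> i < n \<and> j < m)
      \<and> card {v. A v = 1} = r
      \<and> (\<forall>i j j'. A (i, j) = 1 \<and> A (i, j') = 1 \<longrightarrow> j = j')
      \<and> (\<forall>i i' j. A (i, j) = 1 \<and> A (i', j) = 1 \<longrightarrow> i = i')}"

definition UZ :: "nat \<Rightarrow> nat \<Rightarrow> nat \<Rightarrow> (nat \<times> nat \<Rightarrow> complex) set" where
  "UZ n m r = (\<Union>r'\<in>{r..min m n}. rookZ n m r')"

definition act_mono :: "(nat \<Rightarrow> nat) \<Rightarrow> (nat \<Rightarrow> nat) \<Rightarrow> mono \<Rightarrow> mono" where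
  "act_mono g h \<mu> = (\<Sum>v\<in>Poly_Mapping.keys \<mu>. Poly_Mapping.single (g (fst v), h (snd v)) (Poly_Mapping.lookup \<mu> v))"

definition act :: "(nat \<Rightarrow> nat) \<Rightarrow> (nat \<Rightarrow> nat) \<Rightarrow> mpoly \<Rightarrow> mpoly" where
  "act g h p = (\<Sum>\<mu>\<in>Poly_Mapping.keys p. Poly_Mapping.single (act_mono g h \<mu>) (Poly_Mapping.lookup p \<mu>))"

definition sumx :: "nat \<Rightarrow> nat \<Rightarrow> mpoly" where
  "sumx n m = (\<Sum>i<n. \<Sum>j<m. Var (i, j))"

end

theory Submission
  imports Defs
begin


abbreviation ks :: "('a \<Rightarrow>\<^sub>0 'b::zero) \<Rightarrow> 'a set" where "ks \<equiv> Poly_Mapping.keys"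
abbreviation lk :: "('a \<Rightarrow>\<^sub>0 'b::zero) \<Rightarrow> 'a \<Rightarrow> 'b" where "lk \<equiv> Poly_Mapping.lookup"

definition const :: "complex \<Rightarrow> mpoly" where "const c = Poly_Mapping.single 0 c"

definition Le :: "nat \<Rightarrow> nat \<Rightarrow> nat \<Rightarrow> mpoly set" where
  "Le n m k = {p \<in> PR n m. \<forall>\<mu>\<in>ks p. mdeg \<mu> \<le> k}"
definition Lt :: "nat \<Rightarrow> nat \<Rightarrow> nat \<Rightarrow> mpoly set" where
  "Lt n m k = {p \<in> PR n m. \<forall>\<mu>\<in>ks p. mdeg \<mu> < k}"

lemma mdeg_superset: "finite S \<Longrightarrow> ks \<mu> \<subseteq> S \<Longrightarrow> mdeg \<mu> = (\<Sum>v\<in>S. lk \<mu> v)"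
  unfolding mdeg_def by (rule sum.mono_neutral_left) (auto simp: in_keys_iff)

lemma mdeg_add: "mdeg (\<mu> + \<nu>) = mdeg \<mu> + mdeg \<nu>"
proof -
  let ?S = "ks \<mu> \<union> ks \<nu>"
  have f: "finite ?S" by simp
  have "mdeg (\<mu> + \<nu>) = (\<Sum>v\<in>?S. lk (\<mu>+\<nu>) v)"
    using keys_add[of \<mu> \<nu>] by (intro mdeg_superset) auto
  also have "\<dots> = (\<Sum>v\<in>?S. lk \<mu> v) + (\<Sum>v\<in>?S. lk \<nu> v)"
    by (simp add: lookup_add sum.distrib)
  also have "\<dots> = mdeg \<mu> + mdeg \<nu>"
    using mdeg_superset[OF f, of \<mu>] mdeg_superset[OF f, of \<nu>] by auto
  finally show ?thesis .
qed

lemma mdeg_zero[simp]: "mdeg 0 = 0" by (simp add: mdeg_def)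

lemma card_keys_le_mdeg: "card (ks \<mu>) \<le> mdeg \<mu>"
proof -
  have "card (ks \<mu>) = (\<Sum>v\<in>ks \<mu>. 1)" by simp
  also have "\<dots> \<le> (\<Sum>v\<in>ks \<mu>. lk \<mu> v)"
    by (rule sum_mono) (auto simp: in_keys_iff)
  finally show ?thesis by (simp add: mdeg_def)
qed

lemma keys_mono_add: "ks (\<mu> + \<nu>) \<subseteq> ks \<mu> \<union> ks (\<nu>::mono)"
  by (rule keys_add)

lemma keys_mult_sub: "\<kappa> \<in> ks (p * q) \<Longrightarrow> \<exists>\<mu>\<in>ks p. \<exists>\<nu>\<in>ks (q::mpoly). \<kappa> = \<mu> + \<nu>"
  using keys_mult[of p q] by blast

lemma PR_add: "p \<in> PR n m \<Longrightarrow> q \<in> PR n m \<Longrightarrow> p + q \<in> PR n m"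
  unfolding PR_def using keys_add[of p q] by blast
lemma PR_uminus: "p \<in> PR n m \<Longrightarrow> - p \<in> PR n m"
  unfolding PR_def by (simp add: keys_minus)
lemma PR_diff: "p \<in> PR n m \<Longrightarrow> q \<in> PR n m \<Longrightarrow> p - q \<in> PR n m"
  unfolding PR_def using keys_diff[of p q] by blast
lemma PR_zero[simp]: "0 \<in> PR n m" unfolding PR_def by simp
lemma PR_mult: assumes "p \<in> PR n m" "q \<in> PR n m" shows "p * q \<in> PR n m"
  unfolding PR_def mem_Collect_eq
proof (intro ballI)
  fix \<kappa> v assume a: "\<kappa> \<in> ks (p * q)" "v \<in> ks \<kappa>"
  then obtain \<mu> \<nu> where b: "\<mu>\<in>ks p" "\<nu>\<in>ks q" "\<kappa> = \<mu> + \<nu>" using keys_mult_sub by blast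
  then have "v \<in> ks \<mu> \<or> v \<in> ks \<nu>" using a keys_mono_add[of \<mu> \<nu>] by blast
  then show "fst v < n \<and> snd v < m" using assms b unfolding PR_def by blast
qed
lemma PR_sum: "(\<And>i. i \<in> I \<Longrightarrow> f i \<in> PR n m) \<Longrightarrow> sum f I \<in> PR n m"
  by (induction I rule: infinite_finite_induct) (auto intro: PR_add)
lemma PR_single: "(\<forall>v\<in>ks \<mu>. fst v < n \<and> snd v < m) \<Longrightarrow> Poly_Mapping.single \<mu> c \<in> PR n m"
  unfolding PR_def by auto
lemma PR_const: "const c \<in> PR n m"
  unfolding const_def by (rule PR_single) simp

lemma Le_PR: "p \<in> Le n m k \<Longrightarrow> p \<in> PR n m" by (simp add: Le_def)
lemma Lt_PR: "p \<in> Lt n m k \<Longrightarrow> p \<in> PR n m" by (simp add: Lt_def)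
lemma Hom_PR: "p \<in> Hom n m k \<Longrightarrow> p \<in> PR n m" by (simp add: Hom_def)
lemma Lt_Suc: "Lt n m (Suc k) = Le n m k" by (auto simp: Lt_def Le_def less_Suc_eq_le)
lemma Hom_Le: "p \<in> Hom n m k \<Longrightarrow> p \<in> Le n m k" by (auto simp: Hom_def Le_def)
lemma Le_Lt: "p \<in> Le n m k \<Longrightarrow> k < k' \<Longrightarrow> p \<in> Lt n m k'" by (force simp: Lt_def Le_def)
lemma Lt_mono: "p \<in> Lt n m k \<Longrightarrow> k \<le> k' \<Longrightarrow> p \<in> Lt n m k'" by (force simp: Lt_def)
lemma Le_mono: "p \<in> Le n m k \<Longrightarrow> k \<le> k' \<Longrightarrow> p \<in> Le n m k'" by (force simp: Le_def)
lemma Lt_zero_eq: "p \<in> Lt n m 0 \<Longrightarrow> p = 0" by (auto simp: Lt_def)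

lemma Lt_add: "p \<in> Lt n m k \<Longrightarrow> q \<in> Lt n m k \<Longrightarrow> p + q \<in> Lt n m k"
  unfolding Lt_def using keys_add[of p q] PR_add by blast
lemma Lt_diff: "p \<in> Lt n m k \<Longrightarrow> q \<in> Lt n m k \<Longrightarrow> p - q \<in> Lt n m k"
  unfolding Lt_def using keys_diff[of p q] PR_diff by blast
lemma Lt_uminus: "p \<in> Lt n m k \<Longrightarrow> - p \<in> Lt n m k"
  unfolding Lt_def using PR_uminus by (simp add: keys_minus)
lemma Lt_zero[simp]: "0 \<in> Lt n m k" by (simp add: Lt_def)
lemma Lt_sum: "(\<And>i. i \<in> I \<Longrightarrow> f i \<in> Lt n m k) \<Longrightarrow> sum f I \<in> Lt n m k"
  by (induction I rule: infinite_finite_induct) (auto intro: Lt_add)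
lemma Le_add: "p \<in> Le n m k \<Longrightarrow> q \<in> Le n m k \<Longrightarrow> p + q \<in> Le n m k"
  using Lt_add[of p n m "Suc k" q] by (simp add: Lt_Suc)
lemma Le_diff: "p \<in> Le n m k \<Longrightarrow> q \<in> Le n m k \<Longrightarrow> p - q \<in> Le n m k"
  using Lt_diff[of p n m "Suc k" q] by (simp add: Lt_Suc)
lemma Le_sum: "(\<And>i. i \<in> I \<Longrightarrow> f i \<in> Le n m k) \<Longrightarrow> sum f I \<in> Le n m k"
  using Lt_sum[of I f n m "Suc k"] by (simp add: Lt_Suc)

lemma Lt_mult_Le: assumes "p \<in> Lt n m a" "q \<in> Le n m b" shows "p * q \<in> Lt n m (a + b)"
proof -
  have "p * q \<in> PR n m" using assms by (intro PR_mult) (auto simp: Lt_def Le_def)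
  moreover have "\<forall>\<kappa>\<in>ks (p*q). mdeg \<kappa> < a + b"
  proof
    fix \<kappa> assume "\<kappa> \<in> ks (p*q)"
    then obtain \<mu> \<nu> where "\<mu>\<in>ks p" "\<nu>\<in>ks q" "\<kappa> = \<mu> + \<nu>" using keys_mult_sub by blast
    then show "mdeg \<kappa> < a + b" using assms by (force simp: Lt_def Le_def mdeg_add)
  qed
  ultimately show ?thesis by (simp add: Lt_def)
qed

lemma Le_mult: assumes "p \<in> Le n m a" "q \<in> Le n m b" shows "p * q \<in> Le n m (a + b)"
  using Lt_mult_Le[of p n m "Suc a" q b] assms by (simp add: Lt_Suc)

lemma Hom_mult: assumes "p \<in> Hom n m a" "q \<in> Hom n m b" shows "p * q \<in> Hom n m (a + b)"
proof -
  have "p * q \<in> PR n m" using assms by (intro PR_mult) (auto simp: Hom_def)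
  moreover have "\<forall>\<kappa>\<in>ks (p*q). mdeg \<kappa> = a + b"
  proof
    fix \<kappa> assume "\<kappa> \<in> ks (p*q)"
    then obtain \<mu> \<nu> where "\<mu>\<in>ks p" "\<nu>\<in>ks q" "\<kappa> = \<mu> + \<nu>" using keys_mult_sub by blast
    then show "mdeg \<kappa> = a + b" using assms by (force simp: Hom_def mdeg_add)
  qed
  ultimately show ?thesis by (simp add: Hom_def)
qed

lemma Hom_Lt_mult: assumes "p \<in> Hom n m a" "q \<in> Lt n m b" shows "p * q \<in> Lt n m (a + b)"
  using Lt_mult_Le[OF assms(2) Hom_Le[OF assms(1)]] by (simp add: mult.commute add.commute)

lemma Hom_add: "p \<in> Hom n m k \<Longrightarrow> q \<in> Hom n m k \<Longrightarrow> p + q \<in> Hom n m k"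
  unfolding Hom_def using keys_add[of p q] PR_add by blast
lemma Hom_diff: "p \<in> Hom n m k \<Longrightarrow> q \<in> Hom n m k \<Longrightarrow> p - q \<in> Hom n m k"
  unfolding Hom_def using keys_diff[of p q] PR_diff by blast
lemma Hom_zero[simp]: "0 \<in> Hom n m k" by (simp add: Hom_def)
lemma Hom_sum: "(\<And>i. i \<in> I \<Longrightarrow> f i \<in> Hom n m k) \<Longrightarrow> sum f I \<in> Hom n m k"
  by (induction I rule: infinite_finite_induct) (auto intro: Hom_add)

lemma smult_eq: "smult c p = const c * p"
  unfolding smult_def const_def by (rule mult_map_scale_conv_mult)

lemma const_Le: "const c \<in> Le n m 0"
  unfolding Le_def const_def using PR_const[unfolded const_def] by auto
lemma const_Hom: "const c \<in> Hom n m 0"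
  unfolding Hom_def const_def using PR_const[unfolded const_def] by auto

lemma Lt_smult: "p \<in> Lt n m k \<Longrightarrow> smult c p \<in> Lt n m k"
  using Lt_mult_Le[OF _ const_Le, of p n m k c] by (simp add: smult_eq mult.commute)
lemma Le_smult: "p \<in> Le n m k \<Longrightarrow> smult c p \<in> Le n m k"
  using Le_mult[OF const_Le, of p n m k c] by (simp add: smult_eq)
lemma Hom_smult: "p \<in> Hom n m k \<Longrightarrow> smult c p \<in> Hom n m k"
  using Hom_mult[OF const_Hom, of p n m k c] by (simp add: smult_eq)

lemma Var_Hom: "fst v < n \<Longrightarrow> snd v < m \<Longrightarrow> Var v \<in> Hom n m 1"
  unfolding Var_def Hom_def PR_def by (auto simp: mdeg_def)

lemma sumx_Hom: "sumx n m \<in> Hom n m 1"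
  unfolding sumx_def by (intro Hom_sum Var_Hom) auto

lemma Le_const_mult: "p \<in> Le n m k \<Longrightarrow> const c * p \<in> Le n m k"
  using Le_smult by (simp add: smult_eq)

lemma poly_expand: "p = (\<Sum>\<mu>\<in>ks p. Poly_Mapping.single \<mu> (lk p \<mu>))"
  by (rule poly_mapping_eqI) (auto simp: lookup_sum lookup_single when_def in_keys_iff)



definition mon :: "(nat \<times> nat \<Rightarrow> complex) \<Rightarrow> mono \<Rightarrow> complex" where
  "mon A \<mu> = (\<Prod>v\<in>ks \<mu>. A v ^ lk \<mu> v)"

lemma eval_mon: "eval p A = (\<Sum>\<mu>\<in>ks p. lk p \<mu> * mon A \<mu>)"
  by (simp add: eval_def mon_def)

lemma mon_superset: "finite S \<Longrightarrow> ks \<mu> \<subseteq> S \<Longrightarrow> mon A \<mu> = (\<Prod>v\<in>S. A v ^ lk \<mu> v)"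
  unfolding mon_def by (rule prod.mono_neutral_left) (auto simp: in_keys_iff)

lemma mon_add: "mon A (\<mu> + \<nu>) = mon A \<mu> * mon A \<nu>"
proof -
  let ?S = "ks \<mu> \<union> ks \<nu>"
  have f: "finite ?S" by simp
  have "mon A (\<mu> + \<nu>) = (\<Prod>v\<in>?S. A v ^ lk (\<mu>+\<nu>) v)"
    using keys_add[of \<mu> \<nu>] by (intro mon_superset) auto
  also have "\<dots> = (\<Prod>v\<in>?S. A v ^ lk \<mu> v) * (\<Prod>v\<in>?S. A v ^ lk \<nu> v)"
    by (simp add: lookup_add power_add prod.distrib)
  also have "\<dots> = mon A \<mu> * mon A \<nu>"
    using mon_superset[OF f, of \<mu>] mon_superset[OF f, of \<nu>] by auto
  finally show ?thesis .
qed

lemma mon_zero[simp]: "mon A 0 = 1" by (simp add: mon_def)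

lemma eval_superset: "finite S \<Longrightarrow> ks p \<subseteq> S \<Longrightarrow> eval p A = (\<Sum>\<mu>\<in>S. lk p \<mu> * mon A \<mu>)"
  unfolding eval_mon by (rule sum.mono_neutral_left) (auto simp: in_keys_iff)

lemma eval_add: "eval (p + q) A = eval p A + eval q A"
proof -
  let ?S = "ks p \<union> ks q"
  have f: "finite ?S" by simp
  have "eval (p + q) A = (\<Sum>\<mu>\<in>?S. lk (p+q) \<mu> * mon A \<mu>)"
    using keys_add[of p q] by (intro eval_superset) auto
  also have "\<dots> = (\<Sum>\<mu>\<in>?S. lk p \<mu> * mon A \<mu>) + (\<Sum>\<mu>\<in>?S. lk q \<mu> * mon A \<mu>)"
    by (simp add: lookup_add distrib_right sum.distrib)
  also have "\<dots> = eval p A + eval q A"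
    using eval_superset[OF f, of p] eval_superset[OF f, of q] by auto
  finally show ?thesis .
qed

lemma eval_zero[simp]: "eval 0 A = 0" by (simp add: eval_def)

lemma eval_uminus: "eval (- p) A = - eval p A"
proof -
  have "eval p A + eval (-p) A = 0" using eval_add[of p "-p" A] by simp
  then show ?thesis by (metis minus_unique)
qed

lemma eval_diff: "eval (p - q) A = eval p A - eval q A"
  using eval_add[of "p - q" q A] by simp

lemma eval_sum: "eval (sum f I) A = (\<Sum>i\<in>I. eval (f i) A)"
  by (induction I rule: infinite_finite_induct) (auto simp: eval_add)

lemma eval_single: "eval (Poly_Mapping.single \<mu> c) A = c * mon A \<mu>"
  by (cases "c = 0") (auto simp: eval_mon)

lemma mult_expand: "p * q = (\<Sum>\<mu>\<in>ks p. \<Sum>\<nu>\<in>ks (q::mpoly). Poly_Mapping.single (\<mu> + \<nu>) (lk p \<mu> * lk q \<nu>))"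
proof -
  have "p * q = (\<Sum>\<mu>\<in>ks p. Poly_Mapping.single \<mu> (lk p \<mu>)) * (\<Sum>\<nu>\<in>ks q. Poly_Mapping.single \<nu> (lk q \<nu>))"
    using poly_expand[of p] poly_expand[of q] by simp
  also have "\<dots> = (\<Sum>\<mu>\<in>ks p. \<Sum>\<nu>\<in>ks q. Poly_Mapping.single \<mu> (lk p \<mu>) * Poly_Mapping.single \<nu> (lk q \<nu>))"
    by (rule sum_product)
  finally show ?thesis by (simp add: mult_single)
qed

lemma eval_mult: "eval (p * q) A = eval p A * eval q A"
proof -
  have "eval (p * q) A = (\<Sum>\<mu>\<in>ks p. \<Sum>\<nu>\<in>ks q. lk p \<mu> * lk q \<nu> * (mon A \<mu> * mon A \<nu>))"
    by (subst mult_expand) (simp add: eval_sum eval_single mon_add)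
  also have "\<dots> = (\<Sum>\<mu>\<in>ks p. lk p \<mu> * mon A \<mu>) * (\<Sum>\<nu>\<in>ks q. lk q \<nu> * mon A \<nu>)"
    by (simp add: sum_product algebra_simps)
  finally show ?thesis by (simp add: eval_mon)
qed

lemma eval_const[simp]: "eval (const c) A = c"
  by (simp add: const_def eval_single)

lemma one_const: "(1::mpoly) = const 1" by (simp add: const_def)

lemma PR_one: "1 \<in> PR n m" using PR_const one_const by metis

lemma eval_one[simp]: "eval 1 A = 1" by (simp add: one_const)

lemma eval_smult: "eval (smult c p) A = c * eval p A"
  by (simp add: smult_eq eval_mult)

lemma eval_prod: "eval (prod f I) A = (\<Prod>i\<in>I. eval (f i) A)"
  by (induction I rule: infinite_finite_induct) (auto simp: eval_mult)

lemma eval_Var: "eval (Var v) A = A v"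
  by (simp add: Var_def eval_single mon_def)

lemma eval_sumx: "eval (sumx n m) A = (\<Sum>i<n. \<Sum>j<m. A (i, j))"
  by (simp add: sumx_def eval_sum eval_Var)

lemma lookup_hcomp: "lk (hcomp k p) \<mu> = (if mdeg \<mu> = k then lk p \<mu> else 0)"
  unfolding hcomp_def lookup_sum lookup_single
  by (auto simp: when_def in_keys_iff)

lemma hcomp_add: "hcomp k (p + q) = hcomp k p + hcomp k q"
  by (rule poly_mapping_eqI) (simp add: lookup_hcomp lookup_add)

lemma hcomp_zero[simp]: "hcomp k 0 = 0"
  by (rule poly_mapping_eqI) (simp add: lookup_hcomp)

lemma hcomp_sum: "hcomp k (sum f I) = (\<Sum>i\<in>I. hcomp k (f i))"
  by (induction I rule: infinite_finite_induct) (auto simp: hcomp_add)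

lemma hcomp_Hom_same: "p \<in> Hom n m k \<Longrightarrow> hcomp k p = p"
  by (rule poly_mapping_eqI) (auto simp: lookup_hcomp Hom_def in_keys_iff)

lemma hcomp_Hom_other: "p \<in> Hom n m j \<Longrightarrow> j \<noteq> k \<Longrightarrow> hcomp k p = 0"
  by (rule poly_mapping_eqI) (auto simp: lookup_hcomp Hom_def in_keys_iff)

lemma keys_hcomp: "ks (hcomp k p) \<subseteq> {\<mu>\<in>ks p. mdeg \<mu> = k}"
  by (auto simp: in_keys_iff lookup_hcomp split: if_splits)

lemma hcomp_Hom: "p \<in> PR n m \<Longrightarrow> hcomp k p \<in> Hom n m k"
  using keys_hcomp[of k p] unfolding Hom_def PR_def by blast

lemma Le_minus_hcomp: "p \<in> Le n m k \<Longrightarrow> p - hcomp k p \<in> Lt n m k"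
proof -
  assume a: "p \<in> Le n m k"
  have pr: "p - hcomp k p \<in> PR n m"
    using PR_diff[OF Le_PR[OF a] Hom_PR[OF hcomp_Hom[OF Le_PR[OF a]]]] .
  have "\<forall>\<mu>\<in>ks (p - hcomp k p). mdeg \<mu> < k"
  proof
    fix \<mu> assume "\<mu> \<in> ks (p - hcomp k p)"
    then have "lk p \<mu> - lk (hcomp k p) \<mu> \<noteq> 0" by (simp add: in_keys_iff lookup_minus)
    then have "mdeg \<mu> \<noteq> k" "\<mu> \<in> ks p" by (auto simp: lookup_hcomp in_keys_iff split: if_splits)
    then show "mdeg \<mu> < k" using a by (force simp: Le_def)
  qed
  with pr show ?thesis by (simp add: Lt_def)
qed

lemma topc_eq:
  assumes f: "f \<in> Hom n m k" "f \<noteq> 0" and g: "g \<in> Lt n m k"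
  shows "tdeg (f + g) = k" "topc (f + g) = f"
proof -
  have kf: "\<mu> \<in> ks f \<Longrightarrow> mdeg \<mu> = k" for \<mu> using f by (auto simp: Hom_def)
  have kg: "\<mu> \<in> ks g \<Longrightarrow> mdeg \<mu> < k" for \<mu> using g by (auto simp: Lt_def)
  obtain \<mu>0 where \<mu>0: "\<mu>0 \<in> ks f" using f(2) by (metis all_not_in_conv keys_eq_empty)
  have "\<mu>0 \<notin> ks g" using kf[OF \<mu>0] kg[of \<mu>0] by auto
  then have "\<mu>0 \<in> ks (f + g)" using \<mu>0 by (simp add: in_keys_iff lookup_add)
  moreover have "\<forall>\<mu>\<in>ks (f+g). mdeg \<mu> \<le> k"
  proof
    fix \<mu> assume "\<mu> \<in> ks (f+g)"
    then have "\<mu> \<in> ks f \<or> \<mu> \<in> ks g" using keys_add[of f g] by blast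
    then show "mdeg \<mu> \<le> k"
    proof
      assume "\<mu> \<in> ks f" then show ?thesis using kf by simp
    next
      assume "\<mu> \<in> ks g" then show ?thesis using kg by (simp add: less_imp_le)
    qed
  qed
  ultimately have "Max (mdeg ` ks (f + g)) = k" using kf[OF \<mu>0]
    by (intro Max_eqI) auto
  then show t: "tdeg (f + g) = k" by (simp add: tdeg_def)
  have g0: "mdeg \<mu> = k \<Longrightarrow> lk g \<mu> = 0" for \<mu> using kg by (metis in_keys_iff less_irrefl)
  have f0: "mdeg \<mu> \<noteq> k \<Longrightarrow> lk f \<mu> = 0" for \<mu> using kf by (metis in_keys_iff)
  show "topc (f + g) = f"
    unfolding topc_def t
    by (rule poly_mapping_eqI) (simp add: lookup_hcomp lookup_add g0 f0)
qed

lemma topc_props: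
  assumes "p \<in> PR n m"
  shows "topc p \<in> Hom n m (tdeg p)" "p - topc p \<in> Lt n m (tdeg p)"
proof -
  show "topc p \<in> Hom n m (tdeg p)" unfolding topc_def using assms by (rule hcomp_Hom)
  have "p \<in> Le n m (tdeg p)" using assms unfolding Le_def tdeg_def
    by (auto intro: Max_ge)
  then show "p - topc p \<in> Lt n m (tdeg p)" unfolding topc_def by (rule Le_minus_hcomp)
qed

lemma zero_grI: "0 \<in> grI n m Z"
  unfolding grI_def ideal_gen_def by (rule CollectI, rule exI[of _ 0]) auto

lemma grI_intro:
  assumes f: "f \<in> Hom n m k" and g: "g \<in> Lt n m k" and ev: "\<forall>A\<in>Z. eval f A = eval g A"
  shows "f \<in> grI n m Z"
proof (cases "f = 0")
  case True then show ?thesis by (simp add: zero_grI)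
next
  case False
  have "- g \<in> Lt n m k" using g by (rule Lt_uminus)
  note te = topc_eq[OF f False this]
  have pz: "f - g \<noteq> 0"
  proof
    assume "f - g = 0"
    then have "topc (f + - g) = 0" by (simp add: topc_def)
    with te False show False by simp
  qed
  have "f - g \<in> vanI n m Z" unfolding vanI_def
    using f g ev by (auto intro: PR_diff Hom_PR Lt_PR simp: eval_diff)
  then have mem: "f \<in> {topc p | p. p \<in> vanI n m Z \<and> p \<noteq> 0}"
    using te pz by (metis (mono_tags, lifting) diff_conv_add_uminus mem_Collect_eq)
  show ?thesis unfolding grI_def ideal_gen_def
    apply (rule CollectI)
    apply (rule exI[of _ 1], rule exI[of _ "\<lambda>_. 1"], rule exI[of _ "\<lambda>_. f"])
    using mem PR_one by auto
qed

lemma hterm: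
  assumes q: "q \<in> PR n m" and p: "p \<in> vanI n m Z" "p \<noteq> 0"
  shows "\<exists>G\<in>Lt n m k. \<forall>A\<in>Z. eval (hcomp k (q * topc p)) A = eval G A"
proof -
  define t where "t = topc p"
  define e where "e = tdeg p"
  have pPR: "p \<in> PR n m" using p by (simp add: vanI_def)
  have tH: "t \<in> Hom n m e" and ptL: "p - t \<in> Lt n m e"
    using topc_props[OF pPR] by (simp_all add: t_def e_def)
  define F where "F = {\<mu>\<in>ks q. mdeg \<mu> + e = k}"
  define q' where "q' = (\<Sum>\<mu>\<in>F. Poly_Mapping.single \<mu> (lk q \<mu>))"
  have sH: "\<mu> \<in> ks q \<Longrightarrow> Poly_Mapping.single \<mu> c \<in> Hom n m (mdeg \<mu>)" for \<mu> c
    using q unfolding Hom_def PR_def by auto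
  have "hcomp k (q * t) = hcomp k (\<Sum>\<mu>\<in>ks q. Poly_Mapping.single \<mu> (lk q \<mu>) * t)"
    by (subst poly_expand[of q]) (simp add: sum_distrib_right)
  also have "\<dots> = (\<Sum>\<mu>\<in>ks q. if mdeg \<mu> + e = k then Poly_Mapping.single \<mu> (lk q \<mu>) * t else 0)"
    unfolding hcomp_sum
  proof (rule sum.cong[OF refl])
    fix \<mu> assume "\<mu> \<in> ks q"
    then have "Poly_Mapping.single \<mu> (lk q \<mu>) * t \<in> Hom n m (mdeg \<mu> + e)"
      by (intro Hom_mult sH tH)
    then show "hcomp k (Poly_Mapping.single \<mu> (lk q \<mu>) * t) =
      (if mdeg \<mu> + e = k then Poly_Mapping.single \<mu> (lk q \<mu>) * t else 0)"
      using hcomp_Hom_same hcomp_Hom_other by metis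
  qed
  also have "\<dots> = q' * t"
    unfolding q'_def F_def sum_distrib_right by (simp add: sum.inter_filter[symmetric])
  finally have hq: "hcomp k (q * t) = q' * t" .
  have q'PR: "q' \<in> PR n m" unfolding q'_def F_def
    by (intro PR_sum) (use sH in \<open>auto intro: Hom_PR\<close>)
  have "q' * (p - t) \<in> Lt n m k"
  proof -
    have "q' * (p - t) \<in> PR n m" using PR_mult[OF q'PR Lt_PR[OF ptL]] .
    moreover have "\<forall>\<kappa>\<in>ks (q' * (p - t)). mdeg \<kappa> < k"
    proof
      fix \<kappa> assume "\<kappa> \<in> ks (q' * (p - t))"
      then obtain \<mu> \<nu> where a: "\<mu>\<in>ks q'" "\<nu>\<in>ks (p - t)" "\<kappa> = \<mu> + \<nu>" using keys_mult_sub by blast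
      have "\<mu> \<in> F" using a(1) keys_sum[of "\<lambda>\<mu>. Poly_Mapping.single \<mu> (lk q \<mu>)" F] unfolding q'_def
        by (auto split: if_splits)
      then have "mdeg \<mu> + e = k" by (simp add: F_def)
      moreover have "mdeg \<nu> < e" using a(2) ptL by (auto simp: Lt_def)
      ultimately show "mdeg \<kappa> < k" using a(3) by (simp add: mdeg_add)
    qed
    ultimately show ?thesis by (simp add: Lt_def)
  qed
  then have G: "- (q' * (p - t)) \<in> Lt n m k" by (rule Lt_uminus)
  show ?thesis
  proof (rule bexI[OF _ G], intro ballI)
    fix A assume "A \<in> Z"
    then have "eval p A = 0" using p by (simp add: vanI_def)
    then show "eval (hcomp k (q * topc p)) A = eval (- (q' * (p - t))) A"
      using hq by (simp add: t_def[symmetric] eval_mult eval_uminus eval_diff algebra_simps)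
  qed
qed

lemma grI_imp:
  assumes f: "f \<in> Hom n m k" and fI: "f \<in> grI n m Z"
  shows "\<exists>g\<in>Lt n m k. \<forall>A\<in>Z. eval f A = eval g A"
proof -
  have "\<exists>(K::nat) q g. f = (\<Sum>i<K. q i * g i) \<and>
    (\<forall>i<K. q i \<in> PR n m \<and> (\<exists>p. g i = topc p \<and> p \<in> vanI n m Z \<and> p \<noteq> 0))"
    using fI unfolding grI_def ideal_gen_def by (simp only: mem_Collect_eq)
  then obtain K q g where fe: "f = (\<Sum>i<(K::nat). q i * g i)" and
    qg: "\<forall>i<K. q i \<in> PR n m \<and> (\<exists>p. g i = topc p \<and> p \<in> vanI n m Z \<and> p \<noteq> 0)"
    by blast
  have "\<forall>i<K. \<exists>G\<in>Lt n m k. \<forall>A\<in>Z. eval (hcomp k (q i * g i)) A = eval G A"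
  proof (intro allI impI)
    fix i assume "i < K"
    then obtain p where "q i \<in> PR n m" "g i = topc p" "p \<in> vanI n m Z" "p \<noteq> 0" using qg by blast
    then show "\<exists>G\<in>Lt n m k. \<forall>A\<in>Z. eval (hcomp k (q i * g i)) A = eval G A"
      using hterm[of "q i" n m p Z k] by simp
  qed
  then obtain G where G: "\<forall>i<K. G i \<in> Lt n m k \<and> (\<forall>A\<in>Z. eval (hcomp k (q i * g i)) A = eval (G i) A)"
    by metis
  have "f = hcomp k f" using hcomp_Hom_same[OF f] by simp
  also have "\<dots> = (\<Sum>i<K. hcomp k (q i * g i))" by (simp add: fe hcomp_sum)
  finally have fe2: "f = (\<Sum>i<K. hcomp k (q i * g i))" .
  show ?thesis
  proof (rule bexI[of _ "\<Sum>i<K. G i"])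
    show "(\<Sum>i<K. G i) \<in> Lt n m k" using G by (intro Lt_sum) auto
    show "\<forall>A\<in>Z. eval f A = eval (\<Sum>i<K. G i) A"
      using G by (subst fe2) (simp add: eval_sum)
  qed
qed



definition cells :: "nat \<Rightarrow> nat \<Rightarrow> (nat \<times> nat) set" where "cells n m = {..<n} \<times> {..<m}"
definition ind :: "(nat \<times> nat) set \<Rightarrow> nat \<times> nat \<Rightarrow> complex" where
  "ind X v = (if v \<in> X then 1 else 0)"
definition sqm :: "(nat \<times> nat) set \<Rightarrow> mono" where
  "sqm S = (\<Sum>v\<in>S. Poly_Mapping.single v 1)"
definition xS :: "(nat \<times> nat) set \<Rightarrow> mpoly" where
  "xS S = Poly_Mapping.single (sqm S) 1"
definition E :: "nat \<Rightarrow> nat \<Rightarrow> ((nat \<times> nat) set \<Rightarrow> complex) \<Rightarrow> (nat \<times> nat) set \<Rightarrow> complex" where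
  "E n m c X = (\<Sum>S\<in>Pow (cells n m). c S * (if S \<subseteq> X then 1 else 0))"
definition RK :: "nat \<Rightarrow> nat \<Rightarrow> nat \<Rightarrow> (nat \<times> nat) set set" where
  "RK n m t = {X. ind X \<in> rookZ n m t}"
definition real_of :: "nat \<Rightarrow> nat \<Rightarrow> ((nat \<times> nat) set \<Rightarrow> complex) \<Rightarrow> mpoly" where
  "real_of n m c = (\<Sum>S\<in>Pow (cells n m). smult (c S) (xS S))"

lemma finite_cells[simp]: "finite (cells n m)" by (simp add: cells_def)

lemma lookup_sqm: "finite S \<Longrightarrow> lk (sqm S) v = (if v \<in> S then 1 else 0)"
  unfolding sqm_def lookup_sum lookup_single by (auto simp: when_def)

lemma keys_sqm: "finite S \<Longrightarrow> ks (sqm S) = S"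
  by (auto simp: in_keys_iff lookup_sqm split: if_splits)

lemma mdeg_sqm: "finite S \<Longrightarrow> mdeg (sqm S) = card S"
  by (simp add: mdeg_def keys_sqm lookup_sqm)

lemma mon_ind: "mon (ind X) \<mu> = (if ks \<mu> \<subseteq> X then 1 else 0)"
proof -
  have "mon (ind X) \<mu> = (\<Prod>v\<in>ks \<mu>. ind X v)"
    unfolding mon_def
    by (rule prod.cong[OF refl]) (auto simp: ind_def in_keys_iff)
  also have "\<dots> = (if ks \<mu> \<subseteq> X then 1 else 0)"
  proof (cases "ks \<mu> \<subseteq> X")
    case True then show ?thesis by (auto simp: ind_def intro!: prod.neutral)
  next
    case False
    then obtain v where "v \<in> ks \<mu>" "v \<notin> X" by blast
    then show ?thesis using False by (auto simp: ind_def intro!: prod_zero)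
  qed
  finally show ?thesis .
qed

lemma eval_ind: "eval p (ind X) = (\<Sum>\<mu>\<in>ks p. lk p \<mu> * (if ks \<mu> \<subseteq> X then 1 else 0))"
  by (simp add: eval_mon mon_ind)

lemma xS_Hom: "S \<subseteq> cells n m \<Longrightarrow> xS S \<in> Hom n m (card S)"
proof -
  assume a: "S \<subseteq> cells n m"
  then have f: "finite S" using finite_subset[OF a finite_cells] by blast
  show ?thesis unfolding xS_def Hom_def PR_def
    using a f by (auto simp: keys_sqm mdeg_sqm cells_def)
qed

lemma eval_xS: "finite S \<Longrightarrow> eval (xS S) (ind X) = (if S \<subseteq> X then 1 else 0)"
  by (simp add: xS_def eval_single mon_ind keys_sqm)

lemma eval_real: "eval (real_of n m c) (ind X) = E n m c X"
  unfolding real_of_def E_def eval_sum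
  by (rule sum.cong[OF refl]) (auto simp: eval_smult eval_xS finite_subset)

lemma smult_zero_left[simp]: "smult 0 p = 0"
  unfolding smult_def by (simp add: map_eq_zero_iff)

lemma real_Lt: "(\<forall>S. k \<le> card S \<longrightarrow> c S = 0) \<Longrightarrow> real_of n m c \<in> Lt n m k"
  unfolding real_of_def
proof (intro Lt_sum)
  fix S assume a: "\<forall>S. k \<le> card S \<longrightarrow> c S = 0" and S: "S \<in> Pow (cells n m)"
  show "smult (c S) (xS S) \<in> Lt n m k"
  proof (cases "card S < k")
    case True
    then show ?thesis using xS_Hom[of S n m] S
      by (intro Lt_smult Le_Lt[OF Hom_Le]) auto
  next
    case False then show ?thesis using a by simp
  qed
qed

lemma real_Le: "(\<forall>S. k < card S \<longrightarrow> c S = 0) \<Longrightarrow> real_of n m c \<in> Le n m k"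
  using real_Lt[of "Suc k" c n m] by (simp add: Lt_Suc Suc_le_eq)

lemma bridge:
  assumes p: "p \<in> Le n m k"
  shows "\<exists>c. (\<forall>S. k < card S \<longrightarrow> c S = 0) \<and> (\<forall>X. eval p (ind X) = E n m c X)"
proof -
  define c where "c S = (\<Sum>\<mu>\<in>{\<mu>\<in>ks p. ks \<mu> = S}. lk p \<mu>)" for S :: "(nat \<times> nat) set"
  have c0: "\<forall>S. k < card S \<longrightarrow> c S = 0"
  proof (intro allI impI)
    fix S :: "(nat \<times> nat) set" assume "k < card S"
    have e: "{\<mu>\<in>ks p. ks \<mu> = S} = {}"
    proof (rule ccontr)
      assume "{\<mu>\<in>ks p. ks \<mu> = S} \<noteq> {}"
      then obtain \<mu> where "\<mu> \<in> ks p" "ks \<mu> = S" by blast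
      then have "mdeg \<mu> \<le> k" "card S \<le> mdeg \<mu>" using p card_keys_le_mdeg[of \<mu>] by (auto simp: Le_def)
      with \<open>k < card S\<close> show False by simp
    qed
    show "c S = 0" unfolding c_def e by simp
  qed
  have "\<forall>X. eval p (ind X) = E n m c X"
  proof
    fix X
    have sub: "ks ` ks p \<subseteq> Pow (cells n m)"
    proof
      fix S assume "S \<in> ks ` ks p"
      then obtain \<mu> where \<mu>: "\<mu> \<in> ks p" "S = ks \<mu>" by blast
      have "\<forall>v\<in>ks \<mu>. fst v < n \<and> snd v < m" using p \<mu>(1) by (simp add: Le_def PR_def)
      then show "S \<in> Pow (cells n m)" using \<mu>(2) by (auto simp: cells_def mem_Times_iff)
    qed
    have "eval p (ind X) = (\<Sum>\<mu>\<in>ks p. lk p \<mu> * (if ks \<mu> \<subseteq> X then 1 else 0))" by (rule eval_ind)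
    also have "\<dots> = (\<Sum>S\<in>Pow (cells n m). \<Sum>\<mu>\<in>{\<mu>\<in>ks p. ks \<mu> = S}. lk p \<mu> * (if ks \<mu> \<subseteq> X then 1 else 0))"
      by (rule sum.group[symmetric]) (use sub in auto)
    also have "\<dots> = E n m c X"
      unfolding E_def c_def sum_distrib_right
      by (rule sum.cong[OF refl], rule sum.cong) auto
    finally show "eval p (ind X) = E n m c X" .
  qed
  with c0 show ?thesis by blast
qed

lemma sum_if_one: "finite A \<Longrightarrow> (\<Sum>x\<in>A. if P x then (1::complex) else 0) = of_nat (card {x\<in>A. P x})"
proof -
  assume "finite A"
  then have "(\<Sum>x\<in>A. if P x then (1::complex) else 0) = (\<Sum>x\<in>{x\<in>A. P x}. 1)"
    by (rule sum.inter_filter[symmetric])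
  then show ?thesis by simp
qed

lemma eval_sumx_ind:
  assumes "X \<subseteq> cells n m"
  shows "eval (sumx n m) (ind X) = of_nat (card X)"
proof -
  have "eval (sumx n m) (ind X) = (\<Sum>v\<in>cells n m. ind X v)"
    unfolding eval_sumx cells_def by (simp add: sum.cartesian_product)
  also have "\<dots> = of_nat (card {v\<in>cells n m. v \<in> X})"
    unfolding ind_def by (rule sum_if_one) simp
  also have "{v\<in>cells n m. v \<in> X} = X" using assms by auto
  finally show ?thesis .
qed

lemma RK_props:
  assumes "X \<in> RK n m t"
  shows "X \<subseteq> cells n m" "finite X" "card X = t"
proof -
  have r: "ind X \<in> rookZ n m t" using assms by (simp add: RK_def)
  show s: "X \<subseteq> cells n m"
  proof
    fix v assume "v \<in> X"
    then have "ind X v \<noteq> 0" by (simp add: ind_def)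
    then show "v \<in> cells n m" using r by (cases v) (auto simp: rookZ_def cells_def)
  qed
  then show "finite X" using finite_subset[OF _ finite_cells] by blast
  have "{v. ind X v = 1} = X" by (auto simp: ind_def)
  then show "card X = t" using r by (simp add: rookZ_def)
qed

lemma RK_remove:
  assumes "X \<in> RK n m (Suc t)" "v \<in> X"
  shows "X - {v} \<in> RK n m t"
proof -
  have r: "ind X \<in> rookZ n m (Suc t)" using assms by (simp add: RK_def)
  have e: "{w. ind (X - {v}) w = 1} = X - {v}" by (auto simp: ind_def)
  have c: "card (X - {v}) = t" using RK_props[OF assms(1)] assms(2) by simp
  have "ind (X - {v}) \<in> rookZ n m t"
    using r unfolding rookZ_def
    apply (simp only: mem_Collect_eq e c)
    apply (auto simp: ind_def split: if_splits)
    done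
  then show ?thesis by (simp add: RK_def)
qed

lemma rookZ_ind:
  assumes "A \<in> rookZ n m t"
  shows "\<exists>X\<in>RK n m t. A = ind X"
proof -
  define X where "X = {v. A v = 1}"
  have h: "A = ind X"
    using assms by (auto simp: rookZ_def ind_def fun_eq_iff X_def)
  then have "ind X \<in> rookZ n m t" using assms by simp
  then show ?thesis using h by (auto simp: RK_def)
qed

lemma UZ_ind:
  assumes "A \<in> UZ n m r"
  shows "\<exists>t. r \<le> t \<and> t \<le> min m n \<and> (\<exists>X\<in>RK n m t. A = ind X)"
  using assms rookZ_ind unfolding UZ_def by fastforce

lemma RK_UZ: "X \<in> RK n m t \<Longrightarrow> r \<le> t \<Longrightarrow> t \<le> min m n \<Longrightarrow> ind X \<in> UZ n m r"
  unfolding UZ_def RK_def by auto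

lemma E_diff: "E n m (\<lambda>S. c S - d S) X = E n m c X - E n m d X"
  unfolding E_def by (simp add: sum_subtractf algebra_simps)

lemma E_add: "E n m (\<lambda>S. c S + d S) X = E n m c X + E n m d X"
  unfolding E_def by (simp add: sum.distrib algebra_simps)

lemma E_scale: "E n m (\<lambda>S. a * c S) X = a * E n m c X"
  unfolding E_def by (simp add: sum_distrib_left algebra_simps)

lemma lemK:
  assumes ct: "\<forall>S. card S \<noteq> k \<longrightarrow> c S = 0" and kt: "k \<le> t"
    and z: "\<forall>X\<in>RK n m t. E n m c X = 0" and Y: "Y \<in> RK n m (Suc t)"
  shows "E n m c Y = 0"
proof -
  have Yc: "Y \<subseteq> cells n m" "finite Y" "card Y = Suc t" using RK_props[OF Y] by auto
  have "(\<Sum>v\<in>Y. E n m c (Y - {v})) = 0"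
    using z RK_remove[OF Y] by simp
  moreover have "(\<Sum>v\<in>Y. E n m c (Y - {v})) = of_nat (Suc t - k) * E n m c Y"
  proof -
    have "(\<Sum>v\<in>Y. E n m c (Y - {v})) =
      (\<Sum>S\<in>Pow (cells n m). c S * (\<Sum>v\<in>Y. if S \<subseteq> Y - {v} then 1 else 0))"
      unfolding E_def by (subst sum.swap) (simp add: sum_distrib_left)
    also have "\<dots> = (\<Sum>S\<in>Pow (cells n m). of_nat (Suc t - k) * (c S * (if S \<subseteq> Y then 1 else 0)))"
    proof (rule sum.cong[OF refl])
      fix S assume S: "S \<in> Pow (cells n m)"
      show "c S * (\<Sum>v\<in>Y. if S \<subseteq> Y - {v} then 1 else 0) =
        of_nat (Suc t - k) * (c S * (if S \<subseteq> Y then 1 else 0))"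
      proof (cases "c S = 0")
        case True then show ?thesis by simp
      next
        case False
        then have cS: "card S = k" using ct by auto
        show ?thesis
        proof (cases "S \<subseteq> Y")
          case True
          have "(\<Sum>v\<in>Y. (if S \<subseteq> Y - {v} then 1 else 0) :: complex) = of_nat (card {v\<in>Y. S \<subseteq> Y - {v}})"
            using Yc(2) by (rule sum_if_one)
          also have "{v\<in>Y. S \<subseteq> Y - {v}} = Y - S" using True by auto
          also have "of_nat (card (Y - S)) = (of_nat (Suc t - k) :: complex)"
            using True Yc cS by (simp add: card_Diff_subset finite_subset)
          finally show ?thesis using True by simp
        next
          case False
          then have "\<forall>v\<in>Y. \<not> S \<subseteq> Y - {v}" by auto
          then show ?thesis using False by simp
        qed
      qed
    qed
    also have "\<dots> = of_nat (Suc t - k) * E n m c Y"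
      unfolding E_def by (simp add: sum_distrib_left)
    finally show ?thesis .
  qed
  ultimately have pz: "of_nat (Suc t - k) * E n m c Y = 0" by metis
  have a0: "(of_nat (Suc t - k) :: complex) \<noteq> 0"
    using Suc_diff_le[OF kt] of_nat_neq_0 by metis
  show ?thesis using pz a0 by (metis mult_eq_0_iff)
qed

lemma lemK_iter:
  assumes ct: "\<forall>S. card S \<noteq> k \<longrightarrow> c S = 0" and kr: "k \<le> r"
    and z: "\<forall>X\<in>RK n m r. E n m c X = 0" and t: "r \<le> t"
  shows "\<forall>X\<in>RK n m t. E n m c X = 0"
  using t
proof (induction t rule: dec_induct)
  case base then show ?case using z by simp
next
  case (step t)
  then show ?case using lemK[OF ct _ step.IH] kr by simp
qed



lemma const_mult: "const (x * y) = const x * const y"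
  by (simp add: const_def mult_single)
lemma const_diff: "const (x - y) = const x - const y"
  by (simp add: const_def single_diff)

lemma sumx_minus_const_Le: "sumx n m - const a \<in> Le n m 1"
  using Le_diff[OF Hom_Le[OF sumx_Hom] Le_mono[OF const_Le]] by simp

lemma alg_prod:
  fixes a :: "nat \<Rightarrow> complex"
  shows "\<exists>G\<in>Lt n m e. (\<Prod>i<e. sumx n m - const (a i)) =
           const (\<Prod>i<e. c - a i) + (sumx n m - const c) * G"
proof (induction e)
  case 0
  show ?case by (rule bexI[of _ 0]) (simp_all add: one_const)
next
  case (Suc e)
  then obtain G where G: "G \<in> Lt n m e"
    "(\<Prod>i<e. sumx n m - const (a i)) = const (\<Prod>i<e. c - a i) + (sumx n m - const c) * G" by blast
  define v where "v = (\<Prod>i<e. c - a i)"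
  define s where "s = sumx n m"
  define G' where "G' = const v + G * (s - const (a e))"
  have "G' \<in> Lt n m (Suc e)"
    unfolding G'_def s_def
    by (intro Lt_add Le_Lt[OF const_Le] Lt_mult_Le[OF G(1) sumx_minus_const_Le, simplified]) simp
  moreover have "(\<Prod>i<Suc e. s - const (a i)) = const (\<Prod>i<Suc e. c - a i) + (s - const c) * G'"
  proof -
    have "(\<Prod>i<Suc e. s - const (a i)) = (const v + (s - const c) * G) * (s - const (a e))"
      using G(2) by (simp add: s_def v_def)
    also have "\<dots> = const v * (const c - const (a e)) + (s - const c) * G'"
      unfolding G'_def by (simp add: algebra_simps)
    also have "const v * (const c - const (a e)) = const (\<Prod>i<Suc e. c - a i)"
      by (simp add: v_def const_mult const_diff)
    finally show ?thesis .
  qed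
  ultimately show ?case unfolding s_def by blast
qed

lemma binom_prod: "(of_nat (N choose e) :: complex) = (\<Prod>i<e. of_nat N - of_nat i) / fact e"
  by (simp add: binomial_gbinomial gbinomial_prod_rev atLeast0LessThan)

lemma count_supsets:
  assumes X: "finite X" and S: "S \<subseteq> X" and k: "card S \<le> k"
  shows "card {T. T \<subseteq> X \<and> S \<subseteq> T \<and> card T = k} = (card X - card S) choose (k - card S)"
proof -
  have fS: "finite S" using X S finite_subset by auto
  let ?U = "{U. U \<subseteq> X - S \<and> card U = k - card S}"
  have eq: "{T. T \<subseteq> X \<and> S \<subseteq> T \<and> card T = k} = (\<lambda>U. U \<union> S) ` ?U"
  proof
    show "{T. T \<subseteq> X \<and> S \<subseteq> T \<and> card T = k} \<subseteq> (\<lambda>U. U \<union> S) ` ?U"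
    proof
      fix T assume T: "T \<in> {T. T \<subseteq> X \<and> S \<subseteq> T \<and> card T = k}"
      then have fT: "finite T" using X finite_subset by auto
      have "T = (T - S) \<union> S" using T by auto
      moreover have "T - S \<in> ?U" using T fT fS by (auto simp: card_Diff_subset)
      ultimately show "T \<in> (\<lambda>U. U \<union> S) ` ?U" by blast
    qed
    show "(\<lambda>U. U \<union> S) ` ?U \<subseteq> {T. T \<subseteq> X \<and> S \<subseteq> T \<and> card T = k}"
    proof
      fix T assume "T \<in> (\<lambda>U. U \<union> S) ` ?U"
      then obtain U where U: "U \<subseteq> X - S" "card U = k - card S" "T = U \<union> S" by blast
      have fU: "finite U" using U(1) X finite_subset by blast
      have "U \<inter> S = {}" using U(1) by blast
      then have "card T = card U + card S" using U(3) fU fS by (simp add: card_Un_disjoint)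
      then show "T \<in> {T. T \<subseteq> X \<and> S \<subseteq> T \<and> card T = k}" using U S k by auto
    qed
  qed
  have inj: "inj_on (\<lambda>U. U \<union> S) ?U"
    by (rule inj_onI) blast
  have "card {T. T \<subseteq> X \<and> S \<subseteq> T \<and> card T = k} = card ?U"
    unfolding eq by (rule card_image[OF inj])
  also have "\<dots> = card (X - S) choose (k - card S)"
    using X by (simp add: n_subsets)
  also have "card (X - S) = card X - card S" using S fS by (simp add: card_Diff_subset)
  finally show ?thesis .
qed

definition lift :: "nat \<Rightarrow> nat \<Rightarrow> ((nat \<times> nat) set \<Rightarrow> complex) \<Rightarrow> (nat \<times> nat) set \<Rightarrow> complex" where
  "lift k r b T = (if card T = k then (\<Sum>S\<in>Pow T. b S / of_nat ((r - card S) choose (k - card S))) else 0)"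

lemma E_lift:
  assumes X: "X \<subseteq> cells n m" and cb: "\<forall>S. k < card S \<longrightarrow> b S = 0"
  shows "E n m (lift k r b) X = (\<Sum>S\<in>Pow (cells n m). b S / of_nat ((r - card S) choose (k - card S)) *
            (if S \<subseteq> X then of_nat ((card X - card S) choose (k - card S)) else 0))"
proof -
  define w where "w S = b S / of_nat ((r - card S) choose (k - card S))" for S
  have fX: "finite X" using finite_subset[OF X finite_cells] .
  have "E n m (lift k r b) X = (\<Sum>T\<in>Pow (cells n m). \<Sum>S\<in>Pow (cells n m).
           if card T = k \<and> S \<subseteq> T \<and> T \<subseteq> X then w S else 0)"
    unfolding E_def
  proof (rule sum.cong[OF refl])
    fix T assume T: "T \<in> Pow (cells n m)"
    show "lift k r b T * (if T \<subseteq> X then 1 else 0) =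
      (\<Sum>S\<in>Pow (cells n m). if card T = k \<and> S \<subseteq> T \<and> T \<subseteq> X then w S else 0)"
    proof (cases "card T = k \<and> T \<subseteq> X")
      case True
      have "(\<Sum>S\<in>Pow (cells n m). if card T = k \<and> S \<subseteq> T \<and> T \<subseteq> X then w S else 0) =
            (\<Sum>S\<in>Pow (cells n m). if S \<subseteq> T then w S else 0)" using True by simp
      also have "\<dots> = (\<Sum>S\<in>{S\<in>Pow (cells n m). S \<subseteq> T}. w S)"
        by (rule sum.inter_filter[symmetric]) simp
      also have "{S\<in>Pow (cells n m). S \<subseteq> T} = Pow T" using T by auto
      finally show ?thesis using True by (simp add: lift_def w_def)
    next
      case False then show ?thesis by (auto simp: lift_def)
    qed
  qed
  also have "\<dots> = (\<Sum>S\<in>Pow (cells n m). \<Sum>T\<in>Pow (cells n m).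
           if card T = k \<and> S \<subseteq> T \<and> T \<subseteq> X then w S else 0)"
    by (rule sum.swap)
  also have "\<dots> = (\<Sum>S\<in>Pow (cells n m). w S *
            (if S \<subseteq> X then of_nat ((card X - card S) choose (k - card S)) else 0))"
  proof (rule sum.cong[OF refl])
    fix S assume S: "S \<in> Pow (cells n m)"
    have "(\<Sum>T\<in>Pow (cells n m). if card T = k \<and> S \<subseteq> T \<and> T \<subseteq> X then w S else 0) =
          (\<Sum>T\<in>{T\<in>Pow (cells n m). card T = k \<and> S \<subseteq> T \<and> T \<subseteq> X}. w S)"
      by (rule sum.inter_filter[symmetric]) simp
    also have "{T\<in>Pow (cells n m). card T = k \<and> S \<subseteq> T \<and> T \<subseteq> X} = {T. T \<subseteq> X \<and> S \<subseteq> T \<and> card T = k}"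
      using X by auto
    also have "(\<Sum>T\<in>{T. T \<subseteq> X \<and> S \<subseteq> T \<and> card T = k}. w S) =
        of_nat (card {T. T \<subseteq> X \<and> S \<subseteq> T \<and> card T = k}) * w S" by simp
    finally have e1: "(\<Sum>T\<in>Pow (cells n m). if card T = k \<and> S \<subseteq> T \<and> T \<subseteq> X then w S else 0) =
        of_nat (card {T. T \<subseteq> X \<and> S \<subseteq> T \<and> card T = k}) * w S" .
    show "(\<Sum>T\<in>Pow (cells n m). if card T = k \<and> S \<subseteq> T \<and> T \<subseteq> X then w S else 0) =
        w S * (if S \<subseteq> X then of_nat ((card X - card S) choose (k - card S)) else 0)"
    proof (cases "k < card S")
      case True
      then have "w S = 0" using cb by (simp add: w_def)
      then show ?thesis using e1 by simp
    next
      case False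
      show ?thesis
      proof (cases "S \<subseteq> X")
        case True
        then show ?thesis using e1 count_supsets[OF fX True] False by simp
      next
        case nS: False
        have e: "{T. T \<subseteq> X \<and> S \<subseteq> T \<and> card T = k} = {}" using nS by auto
        show ?thesis using e1 nS unfolding e by simp
      qed
    qed
  qed
  finally show ?thesis by (simp add: w_def)
qed

lemma core:
  assumes kr: "k \<le> r" and ct: "\<forall>S. card S \<noteq> k \<longrightarrow> c S = 0"
    and cb: "\<forall>S. k < card S \<longrightarrow> b S = 0"
    and eq: "\<forall>X\<in>RK n m r. E n m c X = E n m b X"
  shows "\<exists>Q\<in>Lt n m k. \<forall>t\<ge>r. \<forall>X\<in>RK n m t.
            E n m c X = E n m b X + (of_nat t - of_nat r) * eval Q (ind X)"
proof -
  define W where "W T = c T - lift k r b T" for T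
  have ctW: "\<forall>S. card S \<noteq> k \<longrightarrow> W S = 0" using ct by (simp add: W_def lift_def)
  have Cr: "of_nat ((r - j) choose (k - j)) \<noteq> (0::complex)" if "j \<le> k" for j
    using that kr by (simp add: binomial_eq_0_iff)
  have Wr: "\<forall>X\<in>RK n m r. E n m W X = 0"
  proof
    fix X assume X: "X \<in> RK n m r"
    note Xp = RK_props[OF X]
    have trm: "b S / of_nat ((r - card S) choose (k - card S)) *
         (if S \<subseteq> X then of_nat ((card X - card S) choose (k - card S)) else 0) =
         b S * (if S \<subseteq> X then 1 else 0)" for S
    proof (cases "k < card S")
      case True then show ?thesis using cb by simp
    next
      case False then show ?thesis using Cr[of "card S"] Xp(3) by auto
    qed
    have "E n m (lift k r b) X = (\<Sum>S\<in>Pow (cells n m). b S / of_nat ((r - card S) choose (k - card S)) *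
            (if S \<subseteq> X then of_nat ((card X - card S) choose (k - card S)) else 0))"
      by (rule E_lift[OF Xp(1) cb])
    also have "\<dots> = E n m b X" unfolding E_def trm by (rule refl)
    finally have "E n m (lift k r b) X = E n m b X" .
    then show "E n m W X = 0" unfolding W_def E_diff using eq X by simp
  qed
  have Wt: "\<forall>X\<in>RK n m t. E n m W X = 0" if "r \<le> t" for t
    using lemK_iter[OF ctW kr Wr that] .
  have "\<forall>j. \<exists>G\<in>Lt n m (k - j). (\<Prod>i<k - j. sumx n m - const (of_nat (j + i))) =
           const (\<Prod>i<k - j. of_nat r - of_nat (j + i)) + (sumx n m - const (of_nat r)) * G"
  proof
    fix j
    show "\<exists>G\<in>Lt n m (k - j). (\<Prod>i<k - j. sumx n m - const (of_nat (j + i))) =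
           const (\<Prod>i<k - j. of_nat r - of_nat (j + i)) + (sumx n m - const (of_nat r)) * G"
      using alg_prod[where a="\<lambda>i. of_nat (j + i)" and e="k - j" and c="of_nat r" and n=n and m=m] by simp
  qed
  then obtain Gf where Gf: "\<And>j. Gf j \<in> Lt n m (k - j)"
    "\<And>j. (\<Prod>i<k - j. sumx n m - const (of_nat (j + i))) =
           const (\<Prod>i<k - j. of_nat r - of_nat (j + i)) + (sumx n m - const (of_nat r)) * Gf j"
    by metis
  define cf where "cf S = b S / (fact (k - card S) * of_nat ((r - card S) choose (k - card S)))" for S
  define Q where "Q = (\<Sum>S\<in>Pow (cells n m). if card S \<le> k then smult (cf S) (xS S * Gf (card S)) else 0)"
  have QL: "Q \<in> Lt n m k"
    unfolding Q_def
  proof (intro Lt_sum)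
    fix S assume S: "S \<in> Pow (cells n m)"
    show "(if card S \<le> k then smult (cf S) (xS S * Gf (card S)) else 0) \<in> Lt n m k"
    proof (cases "card S \<le> k")
      case True
      have "xS S * Gf (card S) \<in> Lt n m (card S + (k - card S))"
        using S by (intro Hom_Lt_mult xS_Hom Gf(1)) auto
      then show ?thesis using True by (simp add: Lt_smult)
    qed simp
  qed
  show ?thesis
  proof (rule bexI[OF _ QL], intro allI impI ballI)
    fix t X assume t: "r \<le> t" and X: "X \<in> RK n m t"
    note Xp = RK_props[OF X]
    have "E n m c X = E n m (lift k r b) X"
      using Wt[OF t] X unfolding W_def E_diff by simp
    also have "\<dots> = E n m b X + (of_nat t - of_nat r) * eval Q (ind X)"
    proof -
      have trm: "b S / of_nat ((r - card S) choose (k - card S)) *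
          (if S \<subseteq> X then of_nat ((card X - card S) choose (k - card S)) else 0) =
          b S * (if S \<subseteq> X then 1 else 0) + (of_nat t - of_nat r) *
          eval (if card S \<le> k then smult (cf S) (xS S * Gf (card S)) else 0) (ind X)"
        if S: "S \<in> Pow (cells n m)" for S
      proof -
      have fS: "finite S" using S finite_subset[OF _ finite_cells] by blast
      show ?thesis
      proof (cases "k < card S")
        case True then show ?thesis using cb by simp
      next
        case False
        then have jk: "card S \<le> k" by simp
        show ?thesis
        proof (cases "S \<subseteq> X")
          case False then show ?thesis using jk fS by (simp add: eval_smult eval_mult eval_xS)
        next
          case True
          define j where "j = card S"
          define e where "e = k - j"
          define g where "g = eval (Gf j) (ind X)"
          have jt: "j \<le> t" using True Xp j_def card_mono by metis
          have jr: "j \<le> r" using jk kr j_def by simp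
          have ev: "(\<Prod>i<e. of_nat t - of_nat (j + i)) = (\<Prod>i<e. of_nat r - of_nat (j + i)) + (of_nat t - of_nat r) * g"
            using arg_cong[OF Gf(2)[of j], of "\<lambda>p. eval p (ind X)"] Xp
            by (simp add: eval_prod eval_diff eval_sumx_ind eval_add eval_mult g_def e_def)
          have Ct: "(of_nat ((t - j) choose e) :: complex) = (\<Prod>i<e. of_nat t - of_nat (j + i)) / fact e"
            unfolding binom_prod using jt by (simp add: of_nat_diff algebra_simps)
          have Crr: "(of_nat ((r - j) choose e) :: complex) = (\<Prod>i<e. of_nat r - of_nat (j + i)) / fact e"
            unfolding binom_prod using jr by (simp add: of_nat_diff algebra_simps)
          have Cne: "(of_nat ((r - j) choose e) :: complex) \<noteq> 0" using Cr[of j] jk by (simp add: j_def e_def)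
          have fne: "(fact e :: complex) \<noteq> 0" by simp
          have key: "b S / of_nat ((r - j) choose e) * of_nat ((t - j) choose e) =
                b S + (of_nat t - of_nat r) * (b S / (fact e * of_nat ((r - j) choose e)) * g)"
          proof -
            have H: "of_nat ((t - j) choose e) = (of_nat ((r - j) choose e) :: complex) + (of_nat t - of_nat r) * g / fact e"
              using Ct Crr ev by (simp add: add_divide_distrib)
            show ?thesis unfolding H using Cne fne by (simp add: field_simps)
          qed
          show ?thesis using key True jk fS Xp(3)
            by (simp add: eval_smult eval_mult eval_xS cf_def j_def e_def g_def)
        qed
      qed
      qed
      have "E n m b X + (of_nat t - of_nat r) * eval Q (ind X) =
        (\<Sum>S\<in>Pow (cells n m). b S * (if S \<subseteq> X then 1 else 0) + (of_nat t - of_nat r) *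
          eval (if card S \<le> k then smult (cf S) (xS S * Gf (card S)) else 0) (ind X))"
        unfolding E_def Q_def eval_sum by (simp add: sum_distrib_left sum.distrib)
      also have "\<dots> = (\<Sum>S\<in>Pow (cells n m). b S / of_nat ((r - card S) choose (k - card S)) *
          (if S \<subseteq> X then of_nat ((card X - card S) choose (k - card S)) else 0))"
        by (rule sum.cong[OF refl]) (rule trm[symmetric])
      finally have F: "E n m b X + (of_nat t - of_nat r) * eval Q (ind X) =
        (\<Sum>S\<in>Pow (cells n m). b S / of_nat ((r - card S) choose (k - card S)) *
          (if S \<subseteq> X then of_nat ((card X - card S) choose (k - card S)) else 0))" .
      show ?thesis by (simp only: E_lift[OF Xp(1) cb] F)
    qed
    finally show "E n m c X = E n m b X + (of_nat t - of_nat r) * eval Q (ind X)" .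
  qed
qed



lemma lookup_act_mono:
  assumes inj: "inj (\<lambda>v. (g (fst v), h (snd v)))"
  shows "lk (act_mono g h \<mu>) (g (fst v), h (snd v)) = lk \<mu> v"
proof -
  have "lk (act_mono g h \<mu>) (g (fst v), h (snd v)) =
      (\<Sum>w\<in>ks \<mu>. if w = v then lk \<mu> w else 0)"
    unfolding act_mono_def lookup_sum lookup_single
  proof (rule sum.cong[OF refl])
    fix w
    have e: "((g (fst w), h (snd w)) = (g (fst v), h (snd v))) = (w = v)"
      using inj_eq[OF inj, of w v] by simp
    show "(lk \<mu> w when (g (fst w), h (snd w)) = (g (fst v), h (snd v))) = (if w = v then lk \<mu> w else 0)"
      unfolding when_def e by (rule refl)
  qed
  also have "\<dots> = lk \<mu> v" by (simp add: in_keys_iff)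
  finally show ?thesis .
qed

lemma keys_act_mono: "ks (act_mono g h \<mu>) \<subseteq> (\<lambda>v. (g (fst v), h (snd v))) ` ks \<mu>"
  unfolding act_mono_def using keys_sum[of "\<lambda>v. Poly_Mapping.single (g (fst v), h (snd v)) (lk \<mu> v)" "ks \<mu>"]
  by (auto split: if_splits)

lemma mon_act_mono:
  assumes inj: "inj (\<lambda>v. (g (fst v), h (snd v)))"
  shows "mon A (act_mono g h \<mu>) = mon (\<lambda>v. A (g (fst v), h (snd v))) \<mu>"
proof -
  let ?p = "\<lambda>v. (g (fst v), h (snd v))"
  have "mon A (act_mono g h \<mu>) = (\<Prod>w\<in>?p ` ks \<mu>. A w ^ lk (act_mono g h \<mu>) w)"
    using keys_act_mono[of g h \<mu>] by (intro mon_superset) auto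
  also have "\<dots> = (\<Prod>v\<in>ks \<mu>. A (?p v) ^ lk (act_mono g h \<mu>) (?p v))"
  proof -
    have ij: "inj_on ?p (ks \<mu>)" using inj by (rule inj_on_subset) simp
    then show ?thesis by (simp add: prod.reindex comp_def)
  qed
  also have "\<dots> = mon (\<lambda>v. A (g (fst v), h (snd v))) \<mu>"
    unfolding mon_def lookup_act_mono[OF inj] by simp
  finally show ?thesis .
qed

lemma mdeg_act_mono:
  assumes inj: "inj (\<lambda>v. (g (fst v), h (snd v)))"
  shows "mdeg (act_mono g h \<mu>) = mdeg \<mu>"
proof -
  let ?p = "\<lambda>v. (g (fst v), h (snd v))"
  have "mdeg (act_mono g h \<mu>) = (\<Sum>w\<in>?p ` ks \<mu>. lk (act_mono g h \<mu>) w)"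
    using keys_act_mono[of g h \<mu>] by (intro mdeg_superset) auto
  also have "\<dots> = (\<Sum>v\<in>ks \<mu>. lk (act_mono g h \<mu>) (?p v))"
  proof -
    have ij: "inj_on ?p (ks \<mu>)" using inj by (rule inj_on_subset) simp
    then show ?thesis by (simp add: sum.reindex comp_def)
  qed
  also have "\<dots> = mdeg \<mu>"
    unfolding mdeg_def lookup_act_mono[OF inj] by simp
  finally show ?thesis .
qed

lemma eval_act:
  assumes inj: "inj (\<lambda>v. (g (fst v), h (snd v)))"
  shows "eval (act g h p) A = eval p (\<lambda>v. A (g (fst v), h (snd v)))"
  unfolding act_def eval_sum eval_single mon_act_mono[OF inj]
  by (simp add: eval_mon mult.commute)

lemma act_Hom:
  assumes inj: "inj (\<lambda>v. (g (fst v), h (snd v)))"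
    and gn: "\<forall>i<n. g i < n" and hm: "\<forall>j<m. h j < m"
    and p: "p \<in> Hom n m k"
  shows "act g h p \<in> Hom n m k"
  unfolding act_def
proof (intro Hom_sum)
  fix \<mu> assume \<mu>: "\<mu> \<in> ks p"
  have "act_mono g h \<mu> \<in> ks (Poly_Mapping.single (act_mono g h \<mu>) (lk p \<mu>))"
    using \<mu> by (simp add: in_keys_iff)
  have pr: "\<forall>v\<in>ks \<mu>. fst v < n \<and> snd v < m" using p \<mu> by (simp add: Hom_def PR_def)
  have "\<forall>w\<in>ks (act_mono g h \<mu>). fst w < n \<and> snd w < m"
  proof
    fix w assume "w \<in> ks (act_mono g h \<mu>)"
    then obtain v where v: "v \<in> ks \<mu>" "w = (g (fst v), h (snd v))" using keys_act_mono[of g h \<mu>] by blast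
    then show "fst w < n \<and> snd w < m" using pr gn hm by simp
  qed
  moreover have "mdeg (act_mono g h \<mu>) = k" using mdeg_act_mono[OF inj] p \<mu> by (simp add: Hom_def)
  ultimately show "Poly_Mapping.single (act_mono g h \<mu>) (lk p \<mu>) \<in> Hom n m k"
    unfolding Hom_def PR_def by auto
qed

lemma perm_facts:
  assumes g: "g permutes {..<n}" and h: "h permutes {..<m}"
  shows "inj (\<lambda>v. (g (fst v), h (snd v)))" "\<forall>i<n. g i < n" "\<forall>j<m. h j < m"
    "\<And>A. eval (sumx n m) (\<lambda>v. A (g (fst v), h (snd v))) = eval (sumx n m) A"
proof -
  have ig: "inj g" and ih: "inj h" using g h by (auto intro: permutes_inj)
  show "inj (\<lambda>v. (g (fst v), h (snd v)))"
  proof (rule injI)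
    fix x y :: "nat \<times> nat" assume "(g (fst x), h (snd x)) = (g (fst y), h (snd y))"
    then have "g (fst x) = g (fst y)" "h (snd x) = h (snd y)" by simp_all
    then have "fst x = fst y" "snd x = snd y" using ig ih by (simp_all add: inj_eq)
    then show "x = y" by (simp add: prod_eq_iff)
  qed
  show "\<forall>i<n. g i < n" using permutes_in_image[OF g] by auto
  show "\<forall>j<m. h j < m" using permutes_in_image[OF h] by auto
  fix A :: "nat \<times> nat \<Rightarrow> complex"
  have bg: "bij_betw g {..<n} {..<n}" and bh: "bij_betw h {..<m} {..<m}"
    using g h by (auto intro: permutes_imp_bij)
  have "(\<Sum>i<n. \<Sum>j<m. A (g i, h j)) = (\<Sum>i<n. \<Sum>j<m. A (g i, j))"
    by (rule sum.cong[OF refl], rule sum.reindex_bij_betw[OF bh])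
  also have "\<dots> = (\<Sum>i<n. \<Sum>j<m. A (i, j))"
    by (rule sum.reindex_bij_betw[OF bg, where g="\<lambda>i. \<Sum>j<m. A (i, j)"])
  finally show "eval (sumx n m) (\<lambda>v. A (g (fst v), h (snd v))) = eval (sumx n m) A"
    by (simp add: eval_sumx)
qed

lemma rookZ_UZ: "r \<le> min m n \<Longrightarrow> A \<in> rookZ n m r \<Longrightarrow> A \<in> UZ n m r"
  unfolding UZ_def by auto

lemma eval_sumx_RK: "X \<in> RK n m t \<Longrightarrow> eval (sumx n m) (ind X) = of_nat t"
  using RK_props[of X n m t] eval_sumx_ind by simp

lemma E_split:
  assumes cb: "\<forall>S. k < card S \<longrightarrow> c S = 0"
  shows "E n m c X = E n m (\<lambda>S. if card S = k then c S else 0) X + E n m (\<lambda>S. if card S < k then c S else 0) X"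
proof -
  have "c = (\<lambda>S. (if card S = k then c S else 0) + (if card S < k then c S else 0))"
    using cb by (auto simp: fun_eq_iff)
  then show ?thesis by (metis (no_types) E_add)
qed



lemma UZ_cases:
  assumes "A \<in> UZ n m r"
  obtains t X where "r \<le> t" "t \<le> min m n" "X \<in> RK n m t" "A = ind X"
  using UZ_ind[OF assms] by blast

lemma part2:
  assumes f: "f \<in> Hom n m d" and fI: "f \<in> grI n m (UZ n m (r + 1))"
  shows "f * sumx n m \<in> grI n m (UZ n m r)"
proof -
  obtain g where g: "g \<in> Lt n m d" "\<forall>A\<in>UZ n m (r + 1). eval f A = eval g A"
    using grI_imp[OF f fI] by blast
  let ?s = "sumx n m"
  define g3 where "g3 = const (of_nat r) * f + g * ?s - const (of_nat r) * g"
  have fs: "f * ?s \<in> Hom n m (d + 1)" using Hom_mult[OF f sumx_Hom] .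
  have "g3 \<in> Lt n m (d + 1)"
    unfolding g3_def
  proof (intro Lt_diff Lt_add)
    show "const (of_nat r) * f \<in> Lt n m (d + 1)"
      using Le_const_mult[OF Hom_Le[OF f]] by (simp add: Lt_Suc)
    show "g * ?s \<in> Lt n m (d + 1)" using Lt_mult_Le[OF g(1) Hom_Le[OF sumx_Hom]] .
    show "const (of_nat r) * g \<in> Lt n m (d + 1)"
    proof -
      have "g * const (of_nat r) \<in> Lt n m d" using Lt_mult_Le[OF g(1) const_Le] by simp
      then show ?thesis by (metis mult.commute Lt_mono le_add1)
    qed
  qed
  moreover have "\<forall>A\<in>UZ n m r. eval (f * ?s) A = eval g3 A"
  proof
    fix A assume A: "A \<in> UZ n m r"
    then obtain t X where tX: "r \<le> t" "t \<le> min m n" "X \<in> RK n m t" "A = ind X" by (rule UZ_cases)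
    have st: "eval ?s A = of_nat t" using eval_sumx_RK[OF tX(3)] tX(4) by simp
    have "(of_nat t - of_nat r) * (eval f A - eval g A) = 0"
    proof (cases "t = r")
      case False
      then have "A \<in> UZ n m (r + 1)" using tX RK_UZ by simp
      then show ?thesis using g(2) by simp
    qed simp
    then show "eval (f * ?s) A = eval g3 A"
      unfolding g3_def using st by (simp add: eval_mult eval_add eval_diff algebra_simps)
  qed
  ultimately show ?thesis using grI_intro[OF fs] by blast
qed

lemma part3:
  assumes g: "g permutes {..<n}" and h: "h permutes {..<m}" and f: "f \<in> Hom n m d"
  shows "act g h (f * sumx n m) - act g h f * sumx n m \<in> grI n m Z"
proof -
  note pf = perm_facts[OF g h]
  have D: "act g h (f * sumx n m) - act g h f * sumx n m \<in> Hom n m (d + 1)"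
    by (intro Hom_diff act_Hom[OF pf(1-3)] Hom_mult[OF f sumx_Hom] Hom_mult[OF _ sumx_Hom] act_Hom[OF pf(1-3) f])
  have "\<forall>A\<in>Z. eval (act g h (f * sumx n m) - act g h f * sumx n m) A = eval 0 A"
    by (simp add: eval_diff eval_act[OF pf(1)] eval_mult pf(4))
  then show ?thesis using grI_intro[OF D Lt_zero] by blast
qed

lemma part4:
  assumes dr: "d < r" and rM: "r < min m n"
    and f: "f \<in> Hom n m d" and fI: "f * sumx n m \<in> grI n m (UZ n m r)"
  shows "f \<in> grI n m (UZ n m (r + 1))"
proof -
  let ?s = "sumx n m"
  obtain g where g: "g \<in> Lt n m (d + 1)" "\<forall>A\<in>UZ n m r. eval (f * ?s) A = eval g A"
    using grI_imp[OF Hom_mult[OF f sumx_Hom] fI] by blast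
  obtain cf where cf: "\<forall>S. d < card S \<longrightarrow> cf S = 0" "\<forall>X. eval f (ind X) = E n m cf X"
    using bridge[OF Hom_Le[OF f]] by blast
  define ctop where "ctop S = (if card S = d then cf S else 0)" for S
  define clow where "clow S = (if card S < d then cf S else 0)" for S
  have Esp: "E n m cf X = E n m ctop X + E n m clow X" for X
    unfolding ctop_def clow_def by (rule E_split[OF cf(1)])
  define fl where "fl = real_of n m clow"
  have flL: "fl \<in> Lt n m d" unfolding fl_def by (rule real_Lt) (simp add: clow_def)
  have evfl: "eval fl (ind X) = E n m clow X" for X by (simp add: fl_def eval_real)
  define g2 where "g2 = g - fl * ?s"
  have g2L: "g2 \<in> Le n m d"
    unfolding g2_def using Lt_diff[OF g(1) Lt_mult_Le[OF flL Hom_Le[OF sumx_Hom]]] by (simp add: Lt_Suc)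
  obtain b where b: "\<forall>S. d < card S \<longrightarrow> b S = 0" "\<forall>X. eval g2 (ind X) = E n m b X"
    using bridge[OF g2L] by blast
  have key1: "of_nat t * E n m ctop X = E n m b X" if t: "r \<le> t" "t \<le> min m n" and X: "X \<in> RK n m t" for t X
  proof -
    have A: "ind X \<in> UZ n m r" using RK_UZ[OF X t] .
    have st: "eval ?s (ind X) = of_nat t" using eval_sumx_RK[OF X] .
    have "E n m b X = eval g (ind X) - eval fl (ind X) * of_nat t"
      using b(2)[rule_format, of X] st by (simp add: g2_def eval_diff eval_mult)
    also have "eval g (ind X) = (E n m ctop X + E n m clow X) * of_nat t"
      using g(2)[rule_format, OF A] st cf(2)[rule_format, of X] Esp[of X] by (simp add: eval_mult)
    finally show ?thesis using evfl by (simp add: algebra_simps)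
  qed
  have ct: "\<forall>S. card S \<noteq> d \<longrightarrow> of_nat r * ctop S = 0" by (simp add: ctop_def)
  have eqr: "\<forall>X\<in>RK n m r. E n m (\<lambda>S. of_nat r * ctop S) X = E n m b X"
    using key1[of r] rM by (simp add: E_scale)
  obtain Q where Q: "Q \<in> Lt n m d" "\<forall>t\<ge>r. \<forall>X\<in>RK n m t.
      E n m (\<lambda>S. of_nat r * ctop S) X = E n m b X + (of_nat t - of_nat r) * eval Q (ind X)"
    using core[OF less_imp_le[OF dr] ct b(1) eqr] by blast
  define hh where "hh = fl - Q"
  have hL: "hh \<in> Lt n m d" unfolding hh_def using Lt_diff[OF flL Q(1)] .
  have "\<forall>A\<in>UZ n m (r + 1). eval f A = eval hh A"
  proof
    fix A assume A: "A \<in> UZ n m (r + 1)"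
    then obtain t X where tX: "r + 1 \<le> t" "t \<le> min m n" "X \<in> RK n m t" "A = ind X" by (rule UZ_cases)
    have k1: "of_nat t * E n m ctop X = E n m b X" using key1[of t X] tX by simp
    have k2: "of_nat r * E n m ctop X = E n m b X + (of_nat t - of_nat r) * eval Q (ind X)"
      using Q(2) tX by (simp add: E_scale)
    have eq: "(of_nat t - of_nat r) * E n m ctop X = (of_nat t - of_nat r) * (- eval Q (ind X))"
      using k1 k2 by (simp add: algebra_simps)
    have nz: "(of_nat t - of_nat r :: complex) \<noteq> 0" using tX(1) by simp
    from mult_left_cancel[OF nz] eq have "E n m ctop X = - eval Q (ind X)" by blast
    then show "eval f A = eval hh A"
      using tX(4) cf(2) Esp evfl by (simp add: hh_def eval_diff)
  qed
  then show ?thesis using grI_intro[OF f hL] by blast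
qed

lemma part5a:
  assumes dr: "d < r" and rM: "r < min m n"
    and f: "f \<in> Hom n m (d + 1)" and fI: "f \<in> grI n m (rookZ n m r)"
  shows "\<exists>p\<in>grI n m (UZ n m r). \<exists>q\<in>Hom n m d. f = p + q * sumx n m"
proof -
  let ?s = "sumx n m"
  obtain g where g: "g \<in> Lt n m (d + 1)" "\<forall>A\<in>rookZ n m r. eval f A = eval g A"
    using grI_imp[OF f fI] by blast
  obtain cf where cf: "\<forall>S. d + 1 < card S \<longrightarrow> cf S = 0" "\<forall>X. eval f (ind X) = E n m cf X"
    using bridge[OF Hom_Le[OF f]] by blast
  define ctop where "ctop S = (if card S = d + 1 then cf S else 0)" for S
  define clow where "clow S = (if card S < d + 1 then cf S else 0)" for S
  have Esp: "E n m cf X = E n m ctop X + E n m clow X" for X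
    unfolding ctop_def clow_def by (rule E_split[OF cf(1)])
  define fl where "fl = real_of n m clow"
  have flL: "fl \<in> Lt n m (d + 1)" unfolding fl_def by (rule real_Lt) (simp add: clow_def)
  have evfl: "eval fl (ind X) = E n m clow X" for X by (simp add: fl_def eval_real)
  have g2L: "g - fl \<in> Le n m d"
    using Lt_diff[OF g(1) flL] by (simp add: Lt_Suc)
  obtain b where b: "\<forall>S. d < card S \<longrightarrow> b S = 0" "\<forall>X. eval (g - fl) (ind X) = E n m b X"
    using bridge[OF g2L] by blast
  have ct: "\<forall>S. card S \<noteq> d + 1 \<longrightarrow> ctop S = 0" by (simp add: ctop_def)
  have cb: "\<forall>S. d + 1 < card S \<longrightarrow> b S = 0" using b(1) by simp
  have eqr: "\<forall>X\<in>RK n m r. E n m ctop X = E n m b X"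
  proof
    fix X assume X: "X \<in> RK n m r"
    have iX: "ind X \<in> rookZ n m r" using X by (simp add: RK_def)
    have h2: "eval g (ind X) = E n m ctop X + E n m clow X"
      using g(2)[rule_format, OF iX] cf(2)[rule_format, of X] Esp[of X] by simp
    have h1: "E n m b X = eval g (ind X) - E n m clow X"
      using b(2)[rule_format, of X] evfl by (simp add: eval_diff)
    show "E n m ctop X = E n m b X" unfolding h1 h2 by simp
  qed
  obtain Q where Q: "Q \<in> Lt n m (d + 1)" "\<forall>t\<ge>r. \<forall>X\<in>RK n m t.
      E n m ctop X = E n m b X + (of_nat t - of_nat r) * eval Q (ind X)"
    using core[of "d + 1" r ctop b n m] dr ct cb eqr by auto
  have QL: "Q \<in> Le n m d" using Q(1) by (simp add: Lt_Suc)
  define q where "q = hcomp d Q"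
  have qH: "q \<in> Hom n m d" unfolding q_def by (rule hcomp_Hom[OF Le_PR[OF QL]])
  have Qq: "Q - q \<in> Lt n m d" unfolding q_def by (rule Le_minus_hcomp[OF QL])
  define p where "p = f - q * ?s"
  have pH: "p \<in> Hom n m (d + 1)" unfolding p_def using Hom_diff[OF f Hom_mult[OF qH sumx_Hom]] .
  define g3 where "g3 = real_of n m b + fl - const (of_nat r) * Q + (Q - q) * ?s"
  have g3L: "g3 \<in> Lt n m (d + 1)"
    unfolding g3_def
  proof (intro Lt_add Lt_diff)
    show "real_of n m b \<in> Lt n m (d + 1)" using real_Le[OF b(1)] by (simp add: Lt_Suc)
    show "fl \<in> Lt n m (d + 1)" using flL .
    show "const (of_nat r) * Q \<in> Lt n m (d + 1)" using Le_const_mult[OF QL] by (simp add: Lt_Suc)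
    show "(Q - q) * ?s \<in> Lt n m (d + 1)" using Lt_mult_Le[OF Qq Hom_Le[OF sumx_Hom]] .
  qed
  have "\<forall>A\<in>UZ n m r. eval p A = eval g3 A"
  proof
    fix A assume A: "A \<in> UZ n m r"
    then obtain t X where tX: "r \<le> t" "t \<le> min m n" "X \<in> RK n m t" "A = ind X" by (rule UZ_cases)
    have st: "eval ?s (ind X) = of_nat t" using eval_sumx_RK[OF tX(3)] .
    have Eb: "E n m b X = eval g (ind X) - E n m clow X" using b(2) evfl by (simp add: eval_diff)
    have "eval p A = E n m ctop X + E n m clow X - eval q (ind X) * of_nat t"
      using tX(4) cf(2) Esp st by (simp add: p_def eval_diff eval_mult)
    also have "E n m ctop X = E n m b X + (of_nat t - of_nat r) * eval Q (ind X)"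
      using Q(2) tX by simp
    finally show "eval p A = eval g3 A"
      using tX(4) st evfl by (simp add: g3_def eval_add eval_diff eval_mult eval_real algebra_simps)
  qed
  then have "p \<in> grI n m (UZ n m r)" using grI_intro[OF pH g3L] by blast
  moreover have "f = p + q * ?s" by (simp add: p_def)
  ultimately show ?thesis using qH by blast
qed

lemma part5b:
  assumes rM: "r < min m n"
    and f: "f \<in> Hom n m (d + 1)" and p: "p \<in> grI n m (UZ n m r)" and q: "q \<in> Hom n m d"
    and fe: "f = p + q * sumx n m"
  shows "f \<in> grI n m (rookZ n m r)"
proof -
  let ?s = "sumx n m"
  have pe: "p = f - q * ?s" using fe by simp
  have pH: "p \<in> Hom n m (d + 1)" unfolding pe using Hom_diff[OF f Hom_mult[OF q sumx_Hom]] .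
  obtain g where g: "g \<in> Lt n m (d + 1)" "\<forall>A\<in>UZ n m r. eval p A = eval g A"
    using grI_imp[OF pH p] by blast
  have gL: "g + const (of_nat r) * q \<in> Lt n m (d + 1)"
    using Lt_add[OF g(1)] Le_const_mult[OF Hom_Le[OF q]] by (simp add: Lt_Suc)
  have "\<forall>A\<in>rookZ n m r. eval f A = eval (g + const (of_nat r) * q) A"
  proof
    fix A assume A: "A \<in> rookZ n m r"
    then obtain X where X: "X \<in> RK n m r" "A = ind X" using rookZ_ind by blast
    have st: "eval ?s A = of_nat r" using eval_sumx_RK[OF X(1)] X(2) by simp
    have "A \<in> UZ n m r" using rookZ_UZ[OF _ A] rM by simp
    then show "eval f A = eval (g + const (of_nat r) * q) A"
      using g(2) st fe by (simp add: eval_add eval_mult mult.commute)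
  qed
  then show ?thesis using grI_intro[OF f gL] by blast
qed

theorem mainTheorem14:
  fixes n m r d :: nat
  assumes "d < r" and "r < min m n"
  shows
    \<comment> \<open>mult_(d,r) maps degree d to degree d+1 and is well defined on the quotients\<close>
    "(\<forall>f\<in>Hom n m d. f * sumx n m \<in> Hom n m (d + 1))
   \<and> (\<forall>f\<in>Hom n m d. f \<in> grI n m (UZ n m (r + 1)) \<longrightarrow> f * sumx n m \<in> grI n m (UZ n m r))
    \<comment> \<open>it is S_n x S_m-equivariant (on the quotient)\<close>
   \<and> (\<forall>g h f. g permutes {..<n} \<and> h permutes {..<m} \<and> f \<in> Hom n m d \<longrightarrow>
        act g h (f * sumx n m) - act g h f * sumx n m \<in> grI n m (UZ n m r))
    \<comment> \<open>it is injective\<close>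
   \<and> (\<forall>f\<in>Hom n m d. f * sumx n m \<in> grI n m (UZ n m r) \<longrightarrow> f \<in> grI n m (UZ n m (r + 1)))
    \<comment> \<open>cokernel isomorphism: a linear map on degree d+1 polynomials inducing an
        equivariant bijection R(UZ_r)_(d+1) / image \<rightarrow> R(Z_r)_(d+1)\<close>
   \<and> (\<exists>\<phi>. (\<forall>f\<in>Hom n m (d + 1). \<phi> f \<in> Hom n m (d + 1))
        \<and> (\<forall>f\<in>Hom n m (d + 1). \<forall>f'\<in>Hom n m (d + 1). \<phi> (f + f') = \<phi> f + \<phi> f')
        \<and> (\<forall>c. \<forall>f\<in>Hom n m (d + 1). \<phi> (smult c f) = smult c (\<phi> f))
        \<and> (\<forall>f\<in>Hom n m (d + 1). \<phi> f \<in> grI n m (rookZ n m r) \<longleftrightarrow>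
              (\<exists>p\<in>grI n m (UZ n m r). \<exists>q\<in>Hom n m d. f = p + q * sumx n m))
        \<and> (\<forall>g\<in>Hom n m (d + 1). \<exists>f\<in>Hom n m (d + 1). \<phi> f - g \<in> grI n m (rookZ n m r))
        \<and> (\<forall>g h f. g permutes {..<n} \<and> h permutes {..<m} \<and> f \<in> Hom n m (d + 1) \<longrightarrow>
              \<phi> (act g h f) - act g h (\<phi> f) \<in> grI n m (rookZ n m r)))"
proof -
  let ?s = "sumx n m"
  have c1: "\<forall>f\<in>Hom n m d. f * ?s \<in> Hom n m (d + 1)"
    using Hom_mult sumx_Hom by blast
  have c2: "\<forall>f\<in>Hom n m d. f \<in> grI n m (UZ n m (r + 1)) \<longrightarrow> f * ?s \<in> grI n m (UZ n m r)"
    using part2 by blast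
  have c3: "\<forall>g h f. g permutes {..<n} \<and> h permutes {..<m} \<and> f \<in> Hom n m d \<longrightarrow>
        act g h (f * ?s) - act g h f * ?s \<in> grI n m (UZ n m r)"
    using part3 by blast
  have c4: "\<forall>f\<in>Hom n m d. f * ?s \<in> grI n m (UZ n m r) \<longrightarrow> f \<in> grI n m (UZ n m (r + 1))"
    using part4[OF assms] by blast
  have c5: "\<forall>f\<in>Hom n m (d + 1). (\<lambda>f. f) f \<in> grI n m (rookZ n m r) \<longleftrightarrow>
              (\<exists>p\<in>grI n m (UZ n m r). \<exists>q\<in>Hom n m d. f = p + q * ?s)"
  proof
    fix f assume f: "f \<in> Hom n m (d + 1)"
    show "(\<lambda>f. f) f \<in> grI n m (rookZ n m r) \<longleftrightarrow>
              (\<exists>p\<in>grI n m (UZ n m r). \<exists>q\<in>Hom n m d. f = p + q * ?s)"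
    proof
      assume "(\<lambda>f. f) f \<in> grI n m (rookZ n m r)"
      then show "\<exists>p\<in>grI n m (UZ n m r). \<exists>q\<in>Hom n m d. f = p + q * ?s"
        using part5a[OF assms f] by simp
    next
      assume "\<exists>p\<in>grI n m (UZ n m r). \<exists>q\<in>Hom n m d. f = p + q * ?s"
      then show "(\<lambda>f. f) f \<in> grI n m (rookZ n m r)"
        using part5b[OF assms(2) f] by auto
    qed
  qed
  have c6: "\<exists>\<phi>. (\<forall>f\<in>Hom n m (d + 1). \<phi> f \<in> Hom n m (d + 1))
        \<and> (\<forall>f\<in>Hom n m (d + 1). \<forall>f'\<in>Hom n m (d + 1). \<phi> (f + f') = \<phi> f + \<phi> f')
        \<and> (\<forall>c. \<forall>f\<in>Hom n m (d + 1). \<phi> (smult c f) = smult c (\<phi> f))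
        \<and> (\<forall>f\<in>Hom n m (d + 1). \<phi> f \<in> grI n m (rookZ n m r) \<longleftrightarrow>
              (\<exists>p\<in>grI n m (UZ n m r). \<exists>q\<in>Hom n m d. f = p + q * ?s))
        \<and> (\<forall>g\<in>Hom n m (d + 1). \<exists>f\<in>Hom n m (d + 1). \<phi> f - g \<in> grI n m (rookZ n m r))
        \<and> (\<forall>g h f. g permutes {..<n} \<and> h permutes {..<m} \<and> f \<in> Hom n m (d + 1) \<longrightarrow>
              \<phi> (act g h f) - act g h (\<phi> f) \<in> grI n m (rookZ n m r))"
    apply (rule exI[of _ "\<lambda>f. f"])
    using c5 zero_grI by auto
  show ?thesis using c1 c2 c3 c4 c6 by blast
qed

end
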